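(* Let $n\ge 2$, $0<a\le\infty$, and let $\Psi(x)=\phi(|x|)$ be a rotationally symmetric convex function on the ball $B_a\subseteq\mathbb{R}^n$ of radius $a$ centered at the origin, with $f=\phi'(r)/r>0$ and $h=f+rf'>0$ on $[0,a)$ (so $\Psi$ has positive definite Hessian). With the functions $A,B,D$ of $r$ defined below, the Kähler Sasaki metric $(TB_a,\mathfrak{h}_\Psi)$ has non-negative orthogonal anti-bisectional curvature (NOAB) if and only if (1) when $n=2$: $A+B\ge0$ and $D\ge 0$ everywhere; (2) when $n\ge 3$: $A\ge 0$, $A+B\ge 0$ and $D\ge 0$ everywhere. Here, with $\dot f=\frac1r f'$, $\ddot f=\frac1r(\dot f)'$, $\dddot f=\frac1r(\ddot f)'$, $$A=-\frac{f}{h}\dot f,\qquad B=\frac{r^2}{h}\big(2\dot f^2-f\ddot f\big),$$ $$C=\Big(-4\frac fh+2+8\frac hf-6\frac{h^2}{f^2}\Big)\dot f+4\Big(\frac hf-\frac fh\Big)r^2\ddot f+\frac{r^6}{h}\ddot f^2-r^4\dddot f,$$ $$D=\Big(1+\frac hf\Big)^2A+2\Big(1+\frac hf\Big)B+C.$$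
   Context: Tube domain $T\Omega=\Omega\times\mathbb{R}^n\subseteq\mathbb{C}^n$ with coordinates $z=x+\sqrt{-1}y$; the Kähler Sasaki metric $\mathfrak{h}_\Psi$ has Kähler form $\sqrt{-1}\sum\Psi_{ij}(x)dz_i\wedge d\bar z_j$. For real vectors $u,v\in\mathbb{R}^n$ at a point $x$, the anti-bisectional curvature is $\mathfrak{A}(u,v)=\sum_{i,j,k,\ell}\big(-\Psi_{ijk\ell}+\sum_{p,q}\Psi_{ijp}\Psi_{k\ell q}\Psi^{pq}\big)u_iu_jv_kv_\ell$ (subscripts denote partial derivatives in $x$, $\Psi^{pq}$ the inverse of the Hessian). The metric has (NOAB) if $\mathfrak{A}(u,v)\ge0$ at every point for all $u,v\in\mathbb{R}^n$ with $\sum_{i,j}\Psi_{ij}u_iv_j=0$. *)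

theory Defs
  imports "HOL-Analysis.Analysis"
begin

definition partial :: "'n::finite \<Rightarrow> (real^'n \<Rightarrow> real) \<Rightarrow> real^'n \<Rightarrow> real" where
  "partial i g x = deriv (\<lambda>t. g (x + t *\<^sub>R axis i 1)) 0"

fun iter_partial :: "'n::finite list \<Rightarrow> (real^'n \<Rightarrow> real) \<Rightarrow> real^'n \<Rightarrow> real" where
  "iter_partial [] g = g"
| "iter_partial (i # is) g = partial i (iter_partial is g)"

definition smooth_on :: "(real^'n::finite) set \<Rightarrow> (real^'n \<Rightarrow> real) \<Rightarrow> bool" where
  "smooth_on S g \<longleftrightarrow> (\<forall>is. iter_partial is g differentiable_on S)"

definition eball0 :: "ereal \<Rightarrow> (real^'n::finite) set" where
  "eball0 a = {x. ereal (norm x) < a}"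

definition hess :: "(real^'n::finite \<Rightarrow> real) \<Rightarrow> real^'n \<Rightarrow> real^'n^'n" where
  "hess \<Psi> x = (\<chi> i j. partial i (partial j \<Psi>) x)"

definition anti_bisec :: "(real^'n::finite \<Rightarrow> real) \<Rightarrow> real^'n \<Rightarrow> real^'n \<Rightarrow> real^'n \<Rightarrow> real" where
  "anti_bisec \<Psi> x u v =
     (\<Sum>i\<in>UNIV. \<Sum>j\<in>UNIV. \<Sum>k\<in>UNIV. \<Sum>l\<in>UNIV.
        (- partial i (partial j (partial k (partial l \<Psi>))) x
         + (\<Sum>p\<in>UNIV. \<Sum>q\<in>UNIV.
              partial i (partial j (partial p \<Psi>)) x
            * partial k (partial l (partial q \<Psi>)) x
            * matrix_inv (hess \<Psi> x) $ p $ q))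
        * u $ i * u $ j * v $ k * v $ l)"

text \<open>(NOAB) for the metric on the tube domain over \<Omega>.\<close>
definition NOAB :: "(real^'n::finite \<Rightarrow> real) \<Rightarrow> (real^'n) set \<Rightarrow> bool" where
  "NOAB \<Psi> \<Omega> \<longleftrightarrow>
     (\<forall>x\<in>\<Omega>. \<forall>u v. (\<Sum>i\<in>UNIV. \<Sum>j\<in>UNIV. hess \<Psi> x $ i $ j * u $ i * v $ j) = 0
                   \<longrightarrow> anti_bisec \<Psi> x u v \<ge> 0)"

definition radf :: "(real \<Rightarrow> real) \<Rightarrow> real \<Rightarrow> real" where
  "radf \<phi> r = deriv \<phi> r / r"

definition radh :: "(real \<Rightarrow> real) \<Rightarrow> real \<Rightarrow> real" where
  "radh \<phi> r = radf \<phi> r + r * deriv (radf \<phi>) r"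

definition fdot :: "(real \<Rightarrow> real) \<Rightarrow> real \<Rightarrow> real" where
  "fdot \<phi> r = deriv (radf \<phi>) r / r"

definition fddot :: "(real \<Rightarrow> real) \<Rightarrow> real \<Rightarrow> real" where
  "fddot \<phi> r = deriv (fdot \<phi>) r / r"

definition fdddot :: "(real \<Rightarrow> real) \<Rightarrow> real \<Rightarrow> real" where
  "fdddot \<phi> r = deriv (fddot \<phi>) r / r"

definition coefA :: "(real \<Rightarrow> real) \<Rightarrow> real \<Rightarrow> real" where
  "coefA \<phi> r = - (radf \<phi> r / radh \<phi> r) * fdot \<phi> r"

definition coefB :: "(real \<Rightarrow> real) \<Rightarrow> real \<Rightarrow> real" where
  "coefB \<phi> r = r^2 / radh \<phi> r * (2 * (fdot \<phi> r)^2 - radf \<phi> r * fddot \<phi> r)"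

definition coefC :: "(real \<Rightarrow> real) \<Rightarrow> real \<Rightarrow> real" where
  "coefC \<phi> r =
     (let f = radf \<phi> r; h = radh \<phi> r in
       (-4 * (f / h) + 2 + 8 * (h / f) - 6 * (h^2 / f^2)) * fdot \<phi> r
       + 4 * (h / f - f / h) * r^2 * fddot \<phi> r
       + r^6 / h * (fddot \<phi> r)^2 - r^4 * fdddot \<phi> r)"

definition coefD :: "(real \<Rightarrow> real) \<Rightarrow> real \<Rightarrow> real" where
  "coefD \<phi> r =
     (let q = 1 + radh \<phi> r / radf \<phi> r in
       q^2 * coefA \<phi> r + 2 * q * coefB \<phi> r + coefC \<phi> r)"

end

theory Submission
  imports Defs "HOL-Analysis.Analysis"
begin

definition kd :: "'a \<Rightarrow> 'a \<Rightarrow> real" where "kd i j = (if i = j then 1 else 0)"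

lemma partial_eqI:
  assumes "((\<lambda>t. g (x + t *\<^sub>R axis i 1)) has_real_derivative D) (at 0)"
  shows "partial i g x = D"
  using assms by (simp add: partial_def DERIV_imp_deriv)

lemma partial_cong:
  fixes g g' :: "real^'n::finite \<Rightarrow> real"
  assumes "open S" "x \<in> S" "\<And>y. y \<in> S \<Longrightarrow> g y = g' y"
  shows "partial i g x = partial i g' x"
proof -
  let ?T = "{t::real. x + t *\<^sub>R axis i 1 \<in> S}"
  have "open ((\<lambda>t. x + t *\<^sub>R axis i (1::real)) -` S)"
    by (rule continuous_open_vimage[OF assms(1)]) (intro continuous_intros)
  moreover have "(\<lambda>t. x + t *\<^sub>R axis i (1::real)) -` S = ?T" by auto
  ultimately have "open ?T" by simp
  moreover have "0 \<in> ?T" using assms by simp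
  ultimately have "eventually (\<lambda>t. t \<in> ?T) (nhds 0)" by (rule eventually_nhds_in_open)
  hence "eventually (\<lambda>t. g (x + t *\<^sub>R axis i 1) = g' (x + t *\<^sub>R axis i 1)) (nhds 0)"
    by (rule eventually_mono) (use assms in auto)
  thus ?thesis unfolding partial_def by (rule deriv_cong_ev) simp
qed

lemma partial_frechet:
  fixes g :: "real^'n::finite \<Rightarrow> real"
  assumes "(g has_derivative g') (at y)"
  shows "((\<lambda>t. g (y + t *\<^sub>R axis i 1)) has_real_derivative g' (axis i 1)) (at 0)"
proof -
  have l: "linear g'" using assms has_derivative_linear by blast
  have "((\<lambda>t. y + t *\<^sub>R axis i (1::real)) has_derivative (\<lambda>t. t *\<^sub>R axis i 1)) (at 0)"
    by (auto intro!: derivative_eq_intros)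
  moreover have "(g has_derivative g') (at (y + 0 *\<^sub>R axis i 1))" using assms by simp
  ultimately have "((\<lambda>t. g (y + t *\<^sub>R axis i 1)) has_derivative (\<lambda>t. g' (t *\<^sub>R axis i 1))) (at 0)"
    using has_derivative_compose[of "\<lambda>t. y + t *\<^sub>R axis i (1::real)" _ 0 UNIV g g'] by simp
  moreover have "(\<lambda>t. g' (t *\<^sub>R axis i 1)) = (\<lambda>t. g' (axis i 1) * t)"
    using linear_scale[OF l] by (auto simp: mult.commute)
  ultimately show ?thesis unfolding has_field_derivative_def by metis
qed

lemma partial_frechet_eq:
  fixes g :: "real^'n::finite \<Rightarrow> real"
  assumes "(g has_derivative g') (at y)"
  shows "partial i g y = g' (axis i 1)"
  by (rule partial_eqI[OF partial_frechet[OF assms]])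

lemma ray_frechet:
  fixes g :: "real^'n::finite \<Rightarrow> real"
  assumes "(g has_derivative g') (at (r *\<^sub>R e))"
  shows "((\<lambda>s. g (s *\<^sub>R e)) has_real_derivative g' e) (at r)"
proof -
  have l: "linear g'" using assms has_derivative_linear by blast
  have "((\<lambda>s. s *\<^sub>R e) has_derivative (\<lambda>t. t *\<^sub>R e)) (at r)"
    by (auto intro!: derivative_eq_intros)
  hence "((\<lambda>s. g (s *\<^sub>R e)) has_derivative (\<lambda>t. g' (t *\<^sub>R e))) (at r)"
    using has_derivative_compose[of "\<lambda>s. s *\<^sub>R e" _ r UNIV g g'] assms by simp
  moreover have "(\<lambda>t. g' (t *\<^sub>R e)) = (\<lambda>t. g' e * t)"
    using linear_scale[OF l] by (auto simp: mult.commute)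
  ultimately show ?thesis unfolding has_field_derivative_def by metis
qed

lemma norm_ray_deriv:
  fixes x :: "real^'n::finite"
  assumes "x \<noteq> 0"
  shows "((\<lambda>t. norm (x + t *\<^sub>R axis i 1)) has_real_derivative (x $ i / norm x)) (at 0)"
proof -
  have n0: "(norm has_derivative (\<lambda>h. sgn x \<bullet> h)) (at (x + 0 *\<^sub>R axis i 1))"
    using has_derivative_norm[OF assms] by (simp add: inner_commute)
  have d1: "((\<lambda>t. x + t *\<^sub>R axis i (1::real)) has_derivative (\<lambda>t. t *\<^sub>R axis i 1)) (at 0)"
    by (auto intro!: derivative_eq_intros)
  have "((\<lambda>t. norm (x + t *\<^sub>R axis i 1)) has_derivative (\<lambda>t. sgn x \<bullet> (t *\<^sub>R axis i 1))) (at 0)"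
    by (rule has_derivative_compose[OF d1 n0])
  moreover have "(\<lambda>t. sgn x \<bullet> (t *\<^sub>R axis i 1)) = (\<lambda>t. (x $ i / norm x) * t)"
    by (auto simp: sgn_div_norm inner_axis field_simps)
  ultimately show ?thesis unfolding has_field_derivative_def by metis
qed

lemma radial_ray_deriv:
  fixes x :: "real^'n::finite"
  assumes "x \<noteq> 0" "(g has_real_derivative (norm x * g1)) (at (norm x))"
  shows "((\<lambda>t. g (norm (x + t *\<^sub>R axis i 1))) has_real_derivative (g1 * x $ i)) (at 0)"
proof -
  have "(g has_real_derivative (norm x * g1)) (at (norm (x + 0 *\<^sub>R axis i 1)))" using assms by simp
  from DERIV_chain2[OF this norm_ray_deriv[OF assms(1)]]
  show ?thesis using assms(1) by simp
qed

lemma comp_ray_deriv: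
  "((\<lambda>t. (x + t *\<^sub>R axis i 1) $ j) has_real_derivative kd i j) (at 0)"
  by (auto intro!: derivative_eq_intros simp: kd_def axis_def)


lemma kd_sym: "kd i j = kd j i" by (auto simp: kd_def)

lemma radial_ray_deriv':
  fixes x :: "real^'n::finite"
  assumes "x \<noteq> 0" "(g has_real_derivative (norm x * g1)) (at (norm x))" "D = g1 * x $ i"
  shows "((\<lambda>t. g (norm (x + t *\<^sub>R axis i 1))) has_real_derivative D) (at 0)"
  using radial_ray_deriv[OF assms(1,2)] assms(3) by simp

lemma comp_ray_deriv':
  "D = kd i j \<Longrightarrow> ((\<lambda>t. (x + t *\<^sub>R axis i 1) $ j) has_real_derivative D) (at 0)"
  using comp_ray_deriv by simp

lemma open_eball0: "open (eball0 a)"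
  unfolding eball0_def by (intro open_Collect_less continuous_intros)

locale radial =
  fixes \<Psi> :: "real^'n::finite \<Rightarrow> real" and \<phi> :: "real \<Rightarrow> real" and a :: ereal
  assumes card2: "CARD('n) \<ge> 2" and apos: "0 < a" and smooth: "smooth_on (eball0 a) \<Psi>"
    and rad: "\<forall>x\<in>eball0 a. \<Psi> x = \<phi> (norm x)"
    and pos: "\<forall>r. 0 < r \<and> ereal r < a \<longrightarrow> radf \<phi> r > 0 \<and> radh \<phi> r > 0"
begin

abbreviation "F \<equiv> radf \<phi>"
abbreviation "G \<equiv> fdot \<phi>"
abbreviation "K \<equiv> fddot \<phi>"
abbreviation "L \<equiv> fdddot \<phi>"

definition "I = {r::real. 0 < r \<and> ereal r < a}"

lemma open_I: "open I"
  unfolding I_def by (intro open_Collect_conj open_Collect_less continuous_intros)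

lemma diff_at: "x \<in> eball0 a \<Longrightarrow> iter_partial is \<Psi> differentiable (at x)"
  using smooth open_eball0 unfolding smooth_on_def
  by (meson differentiable_on_eq_differentiable_at)

definition "i0 = (SOME i::'n. True)"
abbreviation "e0 \<equiv> axis i0 (1::real)"

definition "phik k r = iter_partial (replicate k i0) \<Psi> (r *\<^sub>R e0)"

lemma norm_e0: "norm (r *\<^sub>R e0) = \<bar>r\<bar>" by (simp)

lemma I_ball: "r \<in> I \<Longrightarrow> r *\<^sub>R e0 \<in> eball0 a"
  by (auto simp: I_def eball0_def norm_axis_1)

lemma phik_deriv: "r \<in> I \<Longrightarrow> (phik k has_real_derivative phik (Suc k) r) (at r)"
proof -
  assume r: "r \<in> I"
  let ?g = "iter_partial (replicate k i0) \<Psi>"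
  obtain g' where g': "(?g has_derivative g') (at (r *\<^sub>R e0))"
    using diff_at[OF I_ball[OF r]] by (auto simp: differentiable_def)
  have "phik (Suc k) r = partial i0 ?g (r *\<^sub>R e0)" by (simp add: phik_def)
  also have "\<dots> = g' e0" by (rule partial_frechet_eq[OF g'])
  finally show ?thesis using ray_frechet[OF g'] unfolding phik_def by simp
qed

lemma phik_d1: "r \<in> I \<Longrightarrow> (phik 1 has_real_derivative phik 2 r) (at r)"
  using phik_deriv[of r 1] by (simp add: numeral_2_eq_2)
lemma phik_d2: "r \<in> I \<Longrightarrow> (phik 2 has_real_derivative phik 3 r) (at r)"
  using phik_deriv[of r 2] by (simp add: numeral_3_eq_3 numeral_2_eq_2)
lemma phik_d3: "r \<in> I \<Longrightarrow> (phik 3 has_real_derivative phik 4 r) (at r)"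
  using phik_deriv[of r 3] by (simp add: numeral_3_eq_3 eval_nat_numeral)

lemma phi_eq: "r \<in> I \<Longrightarrow> \<phi> r = phik 0 r"
  using rad I_ball[of r] by (auto simp: phik_def I_def norm_axis_1)

lemma phi_deriv: "r \<in> I \<Longrightarrow> (\<phi> has_real_derivative phik 1 r) (at r)"
proof -
  assume r: "r \<in> I"
  have "(phik 0 has_real_derivative phik 1 r) (at r)" using phik_deriv[OF r, of 0] by simp
  thus ?thesis by (rule has_field_derivative_transform_within_open[OF _ open_I r]) (simp add: phi_eq)
qed

lemma F_eq: "r \<in> I \<Longrightarrow> F r = phik 1 r / r"
  by (simp add: radf_def DERIV_imp_deriv[OF phi_deriv])

lemma I_pos: "r \<in> I \<Longrightarrow> r > 0" by (simp add: I_def)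

lemma F_deriv0: "r \<in> I \<Longrightarrow> (F has_real_derivative (phik 2 r / r - phik 1 r / r^2)) (at r)"
proof -
  assume r: "r \<in> I"
  define p1 where "p1 = phik 1"
  define p2 where "p2 = phik 2"
  have d1: "(p1 has_real_derivative p2 r) (at r)" unfolding p1_def p2_def by (rule phik_d1[OF r])
  have "((\<lambda>r. p1 r / r) has_real_derivative (p2 r / r - p1 r / r^2)) (at r)"
    using I_pos[OF r]
    by (auto intro!: derivative_eq_intros d1 simp: field_simps power2_eq_square)
  hence "(F has_real_derivative (p2 r / r - p1 r / r^2)) (at r)"
    by (rule has_field_derivative_transform_within_open[OF _ open_I r]) (simp add: F_eq p1_def)
  thus ?thesis by (simp add: p1_def p2_def)
qed

lemma G_eq: "r \<in> I \<Longrightarrow> G r = phik 2 r / r^2 - phik 1 r / r^3"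
  using I_pos[of r] by (simp add: fdot_def DERIV_imp_deriv[OF F_deriv0] field_simps power2_eq_square power3_eq_cube)

lemma G_deriv0: "r \<in> I \<Longrightarrow> (G has_real_derivative (phik 3 r / r^2 - 3 * phik 2 r / r^3 + 3 * phik 1 r / r^4)) (at r)"
proof -
  assume r: "r \<in> I"
  define p1 where "p1 = phik 1"
  define p2 where "p2 = phik 2"
  define p3 where "p3 = phik 3"
  have d1: "(p1 has_real_derivative p2 r) (at r)" unfolding p1_def p2_def by (rule phik_d1[OF r])
  have d2: "(p2 has_real_derivative p3 r) (at r)" unfolding p3_def p2_def by (rule phik_d2[OF r])
  have "((\<lambda>r. p2 r / r^2 - p1 r / r^3) has_real_derivative (p3 r / r^2 - 3 * p2 r / r^3 + 3 * p1 r / r^4)) (at r)"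
    using I_pos[OF r]
    by (auto intro!: derivative_eq_intros d1 d2 simp: field_simps eval_nat_numeral)
  hence "(G has_real_derivative (p3 r / r^2 - 3 * p2 r / r^3 + 3 * p1 r / r^4)) (at r)"
    by (rule has_field_derivative_transform_within_open[OF _ open_I r]) (simp add: G_eq p1_def p2_def)
  thus ?thesis by (simp add: p1_def p2_def p3_def)
qed

lemma K_eq: "r \<in> I \<Longrightarrow> K r = phik 3 r / r^3 - 3 * phik 2 r / r^4 + 3 * phik 1 r / r^5"
  using I_pos[of r] by (simp add: fddot_def DERIV_imp_deriv[OF G_deriv0] field_simps eval_nat_numeral)

lemma K_deriv0: "r \<in> I \<Longrightarrow> (K has_real_derivative (phik 4 r / r^3 - 6 * phik 3 r / r^4 + 15 * phik 2 r / r^5 - 15 * phik 1 r / r^6)) (at r)"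
proof -
  assume r: "r \<in> I"
  define p1 where "p1 = phik 1"
  define p2 where "p2 = phik 2"
  define p3 where "p3 = phik 3"
  define p4 where "p4 = phik 4"
  have d1: "(p1 has_real_derivative p2 r) (at r)" unfolding p1_def p2_def by (rule phik_d1[OF r])
  have d2: "(p2 has_real_derivative p3 r) (at r)" unfolding p3_def p2_def by (rule phik_d2[OF r])
  have d3: "(p3 has_real_derivative p4 r) (at r)" unfolding p3_def p4_def by (rule phik_d3[OF r])
  have "((\<lambda>r. p3 r / r^3 - 3 * p2 r / r^4 + 3 * p1 r / r^5) has_real_derivative (p4 r / r^3 - 6 * p3 r / r^4 + 15 * p2 r / r^5 - 15 * p1 r / r^6)) (at r)"
    using I_pos[OF r]
    by (auto intro!: derivative_eq_intros d1 d2 d3 simp: field_simps eval_nat_numeral)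
  hence "(K has_real_derivative (p4 r / r^3 - 6 * p3 r / r^4 + 15 * p2 r / r^5 - 15 * p1 r / r^6)) (at r)"
    by (rule has_field_derivative_transform_within_open[OF _ open_I r]) (simp add: K_eq p1_def p2_def p3_def)
  thus ?thesis by (simp add: p1_def p2_def p3_def p4_def)
qed

lemma deriv_r: "(f has_real_derivative D) (at r) \<Longrightarrow> r \<noteq> 0 \<Longrightarrow> (f has_real_derivative r * (deriv f r / r)) (at r)"
  by (simp add: DERIV_imp_deriv)

lemma phi_d: assumes "r \<in> I" shows "(\<phi> has_real_derivative r * F r) (at r)"
  using deriv_r[OF phi_deriv[OF assms]] I_pos[OF assms] by (simp add: radf_def)
lemma F_d: assumes "r \<in> I" shows "(F has_real_derivative r * G r) (at r)"
  using deriv_r[OF F_deriv0[OF assms]] I_pos[OF assms] by (simp add: fdot_def)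
lemma G_d: assumes "r \<in> I" shows "(G has_real_derivative r * K r) (at r)"
  using deriv_r[OF G_deriv0[OF assms]] I_pos[OF assms] by (simp add: fddot_def)
lemma K_d: assumes "r \<in> I" shows "(K has_real_derivative r * L r) (at r)"
  using deriv_r[OF K_deriv0[OF assms]] I_pos[OF assms] by (simp add: fdddot_def)

end

lemma axis_kd: "axis i (1::real) $ j = kd i j" by (simp add: axis_def kd_def)

context radial begin

definition "S0 = eball0 a - {0}"

lemma open_S0: "open S0" unfolding S0_def by (intro open_Diff open_eball0 closed_singleton)

lemma S0_I: "x \<in> S0 \<Longrightarrow> norm x \<in> I" by (auto simp: S0_def I_def eball0_def)
lemma S0_nz: "x \<in> S0 \<Longrightarrow> x \<noteq> 0" by (auto simp: S0_def)

definition "T1 l x = F (norm x) * x $ l"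
definition "T2 k l x = F (norm x) * kd k l + G (norm x) * x $ k * x $ l"
definition "T3 j k l x = G (norm x) * (kd j k * x $ l + kd j l * x $ k + kd k l * x $ j)
    + K (norm x) * x $ j * x $ k * x $ l"
definition "T4 i j k l x = G (norm x) * (kd i j * kd k l + kd i k * kd j l + kd i l * kd j k)
    + K (norm x) * (kd i j * x $ k * x $ l + kd i k * x $ j * x $ l + kd i l * x $ j * x $ k
                  + kd j k * x $ i * x $ l + kd j l * x $ i * x $ k + kd k l * x $ i * x $ j)
    + L (norm x) * x $ i * x $ j * x $ k * x $ l"

lemma p1: assumes x: "x \<in> S0" shows "partial l \<Psi> x = T1 l x"
proof -
  have "partial l \<Psi> x = partial l (\<lambda>y. \<phi> (norm y)) x"
    by (rule partial_cong[OF open_eball0]) (use x rad in \<open>auto simp: S0_def\<close>)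
  also have "\<dots> = T1 l x"
    by (rule partial_eqI, rule radial_ray_deriv'[OF S0_nz[OF x] phi_d[OF S0_I[OF x]]]) (simp add: T1_def)
  finally show ?thesis .
qed

lemma p2: assumes x: "x \<in> S0" shows "partial k (partial l \<Psi>) x = T2 k l x"
proof -
  have "partial k (partial l \<Psi>) x = partial k (T1 l) x"
    by (rule partial_cong[OF open_S0 x]) (use p1 in auto)
  also have "\<dots> = T2 k l x"
    unfolding T1_def
    by (rule partial_eqI)
       (auto intro!: derivative_eq_intros radial_ray_deriv'[OF S0_nz[OF x] F_d[OF S0_I[OF x]]] comp_ray_deriv'
             simp: T2_def algebra_simps axis_kd)
  finally show ?thesis .
qed

lemma p3: assumes x: "x \<in> S0" shows "partial j (partial k (partial l \<Psi>)) x = T3 j k l x"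
proof -
  have "partial j (partial k (partial l \<Psi>)) x = partial j (T2 k l) x"
    by (rule partial_cong[OF open_S0 x]) (use p2 in auto)
  also have "\<dots> = T3 j k l x"
    unfolding T2_def
    by (rule partial_eqI)
       (auto intro!: derivative_eq_intros radial_ray_deriv'[OF S0_nz[OF x] F_d[OF S0_I[OF x]]]
             radial_ray_deriv'[OF S0_nz[OF x] G_d[OF S0_I[OF x]]] comp_ray_deriv'
             simp: T3_def algebra_simps axis_kd kd_sym)
  finally show ?thesis .
qed

lemma p4: assumes x: "x \<in> S0" shows "partial i (partial j (partial k (partial l \<Psi>))) x = T4 i j k l x"
proof -
  have "partial i (partial j (partial k (partial l \<Psi>))) x = partial i (T3 j k l) x"
    by (rule partial_cong[OF open_S0 x]) (use p3 in auto)
  also have "\<dots> = T4 i j k l x"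
    unfolding T3_def
    by (rule partial_eqI)
       (auto intro!: derivative_eq_intros radial_ray_deriv'[OF S0_nz[OF x] K_d[OF S0_I[OF x]]]
             radial_ray_deriv'[OF S0_nz[OF x] G_d[OF S0_I[OF x]]] comp_ray_deriv'
             simp: T4_def algebra_simps kd_sym axis_kd)
  finally show ?thesis .
qed

end

lemma kd_mult: "kd i j * y = (if i = j then y else 0)" by (simp add: kd_def)
lemma mult_kd: "y * kd i j = (if i = j then y else 0)" by (simp add: kd_def)
lemma mult_if0: "(c::real) * (if P then y else 0) = (if P then c * y else 0)" by simp
lemma if0_mult: "(if P then y else 0) * (c::real) = (if P then y * c else 0)" by simp
lemma sum_if_const: "(\<Sum>j\<in>A. if P then f j else 0) = (if P then (\<Sum>j\<in>A. f j) else (0::real))" by simp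

lemmas ksimps = sum_distrib_left sum_distrib_right distrib_left distrib_right
      sum.distrib kd_mult mult_kd mult_if0 if0_mult sum_if_const algebra_simps inner_vec_def

definition t4 :: "real \<Rightarrow> real \<Rightarrow> real \<Rightarrow> real^'n::finite \<Rightarrow> 'n \<Rightarrow> 'n \<Rightarrow> 'n \<Rightarrow> 'n \<Rightarrow> real" where
  "t4 G K L x i j k l = G * (kd i j * kd k l + kd i k * kd j l + kd i l * kd j k)
    + K * (kd i j * x $ k * x $ l + kd i k * x $ j * x $ l + kd i l * x $ j * x $ k
                  + kd j k * x $ i * x $ l + kd j l * x $ i * x $ k + kd k l * x $ i * x $ j)
    + L * x $ i * x $ j * x $ k * x $ l"

lemma st1: fixes x v :: "real^'n::finite" shows
  "(\<Sum>l\<in>UNIV. t4 G K L x i j k l * v$l) =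
    G * (kd i j * v$k + kd i k * v$j + kd j k * v$i)
   + K * (kd i j * x$k * (v \<bullet> x) + kd i k * x$j * (v \<bullet> x) + v$i * x$j * x$k + kd j k * x$i * (v \<bullet> x)
          + v$j * x$i * x$k + v$k * x$i * x$j)
   + L * x$i * x$j * x$k * (v \<bullet> x)"
  unfolding t4_def by (simp add: ksimps)

lemma st2: fixes x v :: "real^'n::finite" shows
  "(\<Sum>k\<in>UNIV. v$k * (G * (kd i j * v$k + kd i k * v$j + kd j k * v$i)
   + K * (kd i j * x$k * b + kd i k * x$j * b + v$i * x$j * x$k + kd j k * x$i * b
          + v$j * x$i * x$k + v$k * x$i * x$j)
   + L * x$i * x$j * x$k * b)) =
    G * (kd i j * (v \<bullet> v) + v$i * v$j + v$j * v$i)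
   + K * (kd i j * b * (v \<bullet> x) + v$i * x$j * b + v$i * x$j * (v \<bullet> x) + x$i * v$j * b
          + v$j * x$i * (v \<bullet> x) + (v \<bullet> v) * x$i * x$j)
   + L * x$i * x$j * b * (v \<bullet> x)"
  by (simp add: ksimps)

lemma st3: fixes x u v :: "real^'n::finite" shows
  "(\<Sum>j\<in>UNIV. u$j * (G * (kd i j * V + v$i * v$j + v$j * v$i)
   + K * (kd i j * b * b' + v$i * x$j * b + v$i * x$j * b' + x$i * v$j * b
          + v$j * x$i * b' + V * x$i * x$j)
   + L * x$i * x$j * b * b')) =
    G * (u$i * V + v$i * (u \<bullet> v) + (u \<bullet> v) * v$i)
   + K * (u$i * b * b' + v$i * (u \<bullet> x) * b + v$i * (u \<bullet> x) * b' + x$i * (u \<bullet> v) * b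
          + (u \<bullet> v) * x$i * b' + V * x$i * (u \<bullet> x))
   + L * x$i * (u \<bullet> x) * b * b'"
  by (simp add: ksimps)

lemma st4: fixes x u v :: "real^'n::finite" shows
  "(\<Sum>i\<in>UNIV. u$i * (G * (u$i * V + v$i * c + c * v$i)
   + K * (u$i * b * b' + v$i * a * b + v$i * a * b' + x$i * c * b
          + c * x$i * b' + V * x$i * a)
   + L * x$i * a * b * b')) =
    G * ((u \<bullet> u) * V + (u \<bullet> v) * c + c * (u \<bullet> v))
   + K * ((u \<bullet> u) * b * b' + (u \<bullet> v) * a * b + (u \<bullet> v) * a * b' + (u \<bullet> x) * c * b
          + c * (u \<bullet> x) * b' + V * (u \<bullet> x) * a)
   + L * (u \<bullet> x) * a * b * b'"
  by (simp add: ksimps)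

lemma contract4:
  fixes u v :: "real^'n::finite"
  shows "(\<Sum>i\<in>UNIV. \<Sum>j\<in>UNIV. \<Sum>k\<in>UNIV. \<Sum>l\<in>UNIV. E i j k l * u$i * u$j * v$k * v$l)
    = (\<Sum>i\<in>UNIV. u$i * (\<Sum>j\<in>UNIV. u$j * (\<Sum>k\<in>UNIV. v$k * (\<Sum>l\<in>UNIV. E i j k l * v$l))))"
  by (simp add: sum_distrib_left mult_ac)

lemma t4_contract:
  fixes x u v :: "real^'n::finite"
  shows "(\<Sum>i\<in>UNIV. \<Sum>j\<in>UNIV. \<Sum>k\<in>UNIV. \<Sum>l\<in>UNIV. t4 G K L x i j k l * u$i * u$j * v$k * v$l)
   = G * ((u \<bullet> u) * (v \<bullet> v) + 2 * (u \<bullet> v)^2)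
   + K * ((u \<bullet> u) * (v \<bullet> x)^2 + 4 * (u \<bullet> x) * (v \<bullet> x) * (u \<bullet> v) + (v \<bullet> v) * (u \<bullet> x)^2)
   + L * (u \<bullet> x)^2 * (v \<bullet> x)^2"
  unfolding contract4 st1 st2 st3 st4 by (simp add: algebra_simps power2_eq_square)


definition t3 :: "real \<Rightarrow> real \<Rightarrow> real^'n::finite \<Rightarrow> 'n \<Rightarrow> 'n \<Rightarrow> 'n \<Rightarrow> real" where
  "t3 G K x j k l = G * (kd j k * x $ l + kd j l * x $ k + kd k l * x $ j) + K * x $ j * x $ k * x $ l"

lemma s3a: fixes x u :: "real^'n::finite" shows
  "(\<Sum>j\<in>UNIV. t3 G K x i j p * u$j) = G * (u$i * x$p + kd i p * (u \<bullet> x) + u$p * x$i) + K * x$i * x$p * (u \<bullet> x)"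
  unfolding t3_def by (simp add: ksimps)

lemma s3b: fixes x u :: "real^'n::finite" shows
  "(\<Sum>i\<in>UNIV. u$i * (G * (u$i * x$p + kd i p * a + u$p * x$i) + K * x$i * x$p * a))
   = G * ((u \<bullet> u) * x$p + u$p * a + u$p * (u \<bullet> x)) + K * (u \<bullet> x) * x$p * a"
  by (simp add: ksimps)

lemma contract2:
  fixes u :: "real^'n::finite"
  shows "(\<Sum>i\<in>UNIV. \<Sum>j\<in>UNIV. E i j * u$i * u$j) = (\<Sum>i\<in>UNIV. u$i * (\<Sum>j\<in>UNIV. E i j * u$j))"
  by (simp add: sum_distrib_left mult_ac)

definition "alphav G K x u = (G * (u \<bullet> u) + K * (u \<bullet> x)^2) *\<^sub>R x + (2 * G * (u \<bullet> x)) *\<^sub>R u"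

lemma t3_contract:
  fixes x u :: "real^'n::finite"
  shows "(\<Sum>i\<in>UNIV. \<Sum>j\<in>UNIV. t3 G K x i j p * u$i * u$j) = alphav G K x u $ p"
  unfolding contract2 s3a s3b alphav_def by (simp add: algebra_simps power2_eq_square)

lemma swap2: "(\<Sum>l\<in>A. \<Sum>p\<in>B. \<Sum>q\<in>C. f l p q) = (\<Sum>p\<in>B. \<Sum>q\<in>C. \<Sum>l\<in>A. f l p q)"
proof -
  have "(\<Sum>l\<in>A. \<Sum>p\<in>B. \<Sum>q\<in>C. f l p q) = (\<Sum>p\<in>B. \<Sum>l\<in>A. \<Sum>q\<in>C. f l p q)" by (rule sum.swap)
  also have "\<dots> = (\<Sum>p\<in>B. \<Sum>q\<in>C. \<Sum>l\<in>A. f l p q)" by (rule sum.cong[OF refl], rule sum.swap)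
  finally show ?thesis .
qed

lemma swap_pq4: "(\<Sum>i\<in>A. \<Sum>j\<in>A. \<Sum>k\<in>A. \<Sum>l\<in>A. \<Sum>p\<in>B. \<Sum>q\<in>B. f i j k l p q)
   = (\<Sum>p\<in>B. \<Sum>q\<in>B. \<Sum>i\<in>A. \<Sum>j\<in>A. \<Sum>k\<in>A. \<Sum>l\<in>A. f i j k l p q)"
proof -
  have "(\<Sum>i\<in>A. \<Sum>j\<in>A. \<Sum>k\<in>A. \<Sum>l\<in>A. \<Sum>p\<in>B. \<Sum>q\<in>B. f i j k l p q)
      = (\<Sum>i\<in>A. \<Sum>j\<in>A. \<Sum>k\<in>A. \<Sum>p\<in>B. \<Sum>q\<in>B. \<Sum>l\<in>A. f i j k l p q)"
    by (rule sum.cong[OF refl], rule sum.cong[OF refl], rule sum.cong[OF refl], rule swap2)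
  also have "\<dots> = (\<Sum>i\<in>A. \<Sum>j\<in>A. \<Sum>p\<in>B. \<Sum>q\<in>B. \<Sum>k\<in>A. \<Sum>l\<in>A. f i j k l p q)"
    by (rule sum.cong[OF refl], rule sum.cong[OF refl], rule swap2)
  also have "\<dots> = (\<Sum>i\<in>A. \<Sum>p\<in>B. \<Sum>q\<in>B. \<Sum>j\<in>A. \<Sum>k\<in>A. \<Sum>l\<in>A. f i j k l p q)"
    by (rule sum.cong[OF refl], rule swap2)
  also have "\<dots> = (\<Sum>p\<in>B. \<Sum>q\<in>B. \<Sum>i\<in>A. \<Sum>j\<in>A. \<Sum>k\<in>A. \<Sum>l\<in>A. f i j k l p q)"
    by (rule swap2)
  finally show ?thesis .
qed

lemma ab_split:
  fixes u v :: "real^'n::finite" and M :: "'n \<Rightarrow> 'n \<Rightarrow> real"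
    and A B :: "'n \<Rightarrow> 'n \<Rightarrow> 'n \<Rightarrow> real" and E :: "'n \<Rightarrow> 'n \<Rightarrow> 'n \<Rightarrow> 'n \<Rightarrow> real"
  shows "(\<Sum>i\<in>UNIV. \<Sum>j\<in>UNIV. \<Sum>k\<in>UNIV. \<Sum>l\<in>UNIV.
        (- E i j k l + (\<Sum>p\<in>UNIV. \<Sum>q\<in>UNIV. A i j p * B k l q * M p q)) * u$i * u$j * v$k * v$l)
   = - (\<Sum>i\<in>UNIV. \<Sum>j\<in>UNIV. \<Sum>k\<in>UNIV. \<Sum>l\<in>UNIV. E i j k l * u$i * u$j * v$k * v$l)
     + (\<Sum>p\<in>UNIV. \<Sum>q\<in>UNIV. M p q * (\<Sum>i\<in>UNIV. \<Sum>j\<in>UNIV. A i j p * u$i * u$j)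
                                  * (\<Sum>k\<in>UNIV. \<Sum>l\<in>UNIV. B k l q * v$k * v$l))"
proof -
  have "(\<Sum>i\<in>UNIV. \<Sum>j\<in>UNIV. \<Sum>k\<in>UNIV. \<Sum>l\<in>UNIV.
        (- E i j k l + (\<Sum>p\<in>UNIV. \<Sum>q\<in>UNIV. A i j p * B k l q * M p q)) * u$i * u$j * v$k * v$l)
   = - (\<Sum>i\<in>UNIV. \<Sum>j\<in>UNIV. \<Sum>k\<in>UNIV. \<Sum>l\<in>UNIV. E i j k l * u$i * u$j * v$k * v$l)
     + (\<Sum>i\<in>UNIV. \<Sum>j\<in>UNIV. \<Sum>k\<in>UNIV. \<Sum>l\<in>UNIV. \<Sum>p\<in>UNIV. \<Sum>q\<in>UNIV.
          M p q * (A i j p * u$i * u$j) * (B k l q * v$k * v$l))"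
  proof -
    have pw: "\<And>i j k l. (- E i j k l + (\<Sum>p\<in>UNIV. \<Sum>q\<in>UNIV. A i j p * B k l q * M p q)) * u$i * u$j * v$k * v$l
       = - (E i j k l * u$i * u$j * v$k * v$l) + (\<Sum>p\<in>UNIV. \<Sum>q\<in>UNIV. M p q * (A i j p * u$i * u$j) * (B k l q * v$k * v$l))"
      by (simp add: sum_distrib_left right_diff_distrib algebra_simps)
    show ?thesis by (simp only: pw sum.distrib sum_negf)
  qed
  also have "\<dots> = - (\<Sum>i\<in>UNIV. \<Sum>j\<in>UNIV. \<Sum>k\<in>UNIV. \<Sum>l\<in>UNIV. E i j k l * u$i * u$j * v$k * v$l)
     + (\<Sum>p\<in>UNIV. \<Sum>q\<in>UNIV. \<Sum>i\<in>UNIV. \<Sum>j\<in>UNIV. \<Sum>k\<in>UNIV. \<Sum>l\<in>UNIV.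
          M p q * (A i j p * u$i * u$j) * (B k l q * v$k * v$l))"
    by (simp only: swap_pq4[where f="\<lambda>i j k l p q. M p q * (A i j p * u$i * u$j) * (B k l q * v$k * v$l)"])
  also have "\<dots> = - (\<Sum>i\<in>UNIV. \<Sum>j\<in>UNIV. \<Sum>k\<in>UNIV. \<Sum>l\<in>UNIV. E i j k l * u$i * u$j * v$k * v$l)
     + (\<Sum>p\<in>UNIV. \<Sum>q\<in>UNIV. M p q * (\<Sum>i\<in>UNIV. \<Sum>j\<in>UNIV. A i j p * u$i * u$j)
                                  * (\<Sum>k\<in>UNIV. \<Sum>l\<in>UNIV. B k l q * v$k * v$l))"
  proof -
    have "(\<Sum>i\<in>UNIV. \<Sum>j\<in>UNIV. \<Sum>k\<in>UNIV. \<Sum>l\<in>UNIV. M p q * (A i j p * u$i * u$j) * (B k l q * v$k * v$l))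
       = M p q * (\<Sum>i\<in>UNIV. \<Sum>j\<in>UNIV. A i j p * u$i * u$j) * (\<Sum>k\<in>UNIV. \<Sum>l\<in>UNIV. B k l q * v$k * v$l)" for p q
    proof -
      have "(\<Sum>i\<in>UNIV. \<Sum>j\<in>UNIV. \<Sum>k\<in>UNIV. \<Sum>l\<in>UNIV. M p q * (A i j p * u$i * u$j) * (B k l q * v$k * v$l))
         = (\<Sum>i\<in>UNIV. \<Sum>j\<in>UNIV. M p q * (A i j p * u$i * u$j) * (\<Sum>k\<in>UNIV. \<Sum>l\<in>UNIV. B k l q * v$k * v$l))"
        by (simp only: sum_distrib_left)
      also have "\<dots> = (\<Sum>i\<in>UNIV. \<Sum>j\<in>UNIV. M p q * (A i j p * u$i * u$j)) * (\<Sum>k\<in>UNIV. \<Sum>l\<in>UNIV. B k l q * v$k * v$l)"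
        by (simp only: sum_distrib_right)
      also have "(\<Sum>i\<in>UNIV. \<Sum>j\<in>UNIV. M p q * (A i j p * u$i * u$j)) = M p q * (\<Sum>i\<in>UNIV. \<Sum>j\<in>UNIV. A i j p * u$i * u$j)"
        by (simp only: sum_distrib_left)
      finally show ?thesis .
    qed
    thus ?thesis by simp
  qed
  finally show ?thesis .
qed

definition minv :: "real \<Rightarrow> real \<Rightarrow> real^'n::finite \<Rightarrow> 'n \<Rightarrow> 'n \<Rightarrow> real" where
  "minv F c x p q = kd p q * inverse F - c * x$p * x$q"

lemma sm1: fixes x w :: "real^'n::finite" shows
  "(\<Sum>q\<in>UNIV. minv F c x p q * w$q) = w$p * inverse F - c * x$p * (w \<bullet> x)"
  unfolding minv_def by (simp add: ksimps sum_subtractf)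

lemma sm2: fixes x w z :: "real^'n::finite" shows
  "(\<Sum>p\<in>UNIV. z$p * (w$p * inverse F - c * x$p * d)) = (z \<bullet> w) * inverse F - c * (z \<bullet> x) * d"
  by (simp add: ksimps sum_subtractf)

lemma minv_bilin: fixes x w z :: "real^'n::finite" shows
  "(\<Sum>p\<in>UNIV. \<Sum>q\<in>UNIV. minv F c x p q * z$p * w$q) = (z \<bullet> w) * inverse F - c * (z \<bullet> x) * (w \<bullet> x)"
proof -
  have "(\<Sum>p\<in>UNIV. \<Sum>q\<in>UNIV. minv F c x p q * z$p * w$q) = (\<Sum>p\<in>UNIV. z$p * (\<Sum>q\<in>UNIV. minv F c x p q * w$q))"
    by (simp add: sum_distrib_left mult_ac)
  thus ?thesis unfolding sm1 sm2 .
qed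

lemma hess_bilin: fixes x u v :: "real^'n::finite" shows
  "(\<Sum>i\<in>UNIV. \<Sum>j\<in>UNIV. (F * kd i j + G * x$i * x$j) * u$i * v$j) = F * (u \<bullet> v) + G * (u \<bullet> x) * (v \<bullet> x)"
proof -
  have "(\<Sum>i\<in>UNIV. \<Sum>j\<in>UNIV. (F * kd i j + G * x$i * x$j) * u$i * v$j) = (\<Sum>i\<in>UNIV. u$i * (\<Sum>j\<in>UNIV. (F * kd i j + G * x$i * x$j) * v$j))"
    by (simp add: sum_distrib_left mult_ac)
  also have "\<dots> = (\<Sum>i\<in>UNIV. u$i * (F * v$i + G * x$i * (v \<bullet> x)))"
    by (rule sum.cong[OF refl]) (simp add: ksimps)
  also have "\<dots> = F * (u \<bullet> v) + G * (u \<bullet> x) * (v \<bullet> x)"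
    by (simp add: ksimps)
  finally show ?thesis .
qed

lemma matrix_inv_eq:
  fixes A B :: "real^'n::finite^'n"
  assumes "A ** B = mat 1" "B ** A = mat 1"
  shows "matrix_inv A = B"
proof -
  let ?C = "matrix_inv A"
  have "A ** ?C = mat 1 \<and> ?C ** A = mat 1"
    unfolding matrix_inv_def by (rule someI[of _ B]) (use assms in auto)
  hence "?C = ?C ** (A ** B)" using assms by (simp add: matrix_mul_rid)
  also have "\<dots> = (?C ** A) ** B" by (simp add: matrix_mul_assoc)
  also have "\<dots> = B" using \<open>A ** ?C = mat 1 \<and> ?C ** A = mat 1\<close> by (simp add: matrix_mul_lid)
  finally show ?thesis .
qed

lemma inv_formula:
  fixes x :: "real^'n::finite"
  assumes "F \<noteq> 0" "F + (x \<bullet> x) * G \<noteq> 0"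
  defines "c \<equiv> G / (F * (F + (x \<bullet> x) * G))"
  shows "matrix_inv (\<chi> i j. F * kd i j + G * x$i * x$j) = (\<chi> p q. minv F c x p q)"
proof (rule matrix_inv_eq)
  have h: "c * (F + (x \<bullet> x) * G) = G / F"
  proof -
    have "c * (F + (x \<bullet> x) * G) = (G / F) * ((F + (x \<bullet> x) * G) / (F + (x \<bullet> x) * G))"
      unfolding c_def by (simp add: mult_ac)
    thus ?thesis using assms(2) by (simp add: mult.commute)
  qed
  have "G / F - c * F - c * G * (x \<bullet> x) = G / F - c * (F + (x \<bullet> x) * G)" by (simp add: algebra_simps)
  hence key: "G / F - c * F - c * G * (x \<bullet> x) = 0" using h by simp
  have e1: "(\<Sum>k\<in>UNIV. (F * kd i k + G * x$i * x$k) * minv F c x k j) = kd i j" for i j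
  proof -
    have "(\<Sum>k\<in>UNIV. (F * kd i k + G * x$i * x$k) * minv F c x k j) = kd i j + x$i * x$j * (G / F - c * F - c * G * (x \<bullet> x))"
      unfolding minv_def using assms(1) by (simp add: ksimps sum_subtractf) (simp add: field_simps kd_def)
    thus ?thesis using key by simp
  qed
  have e2: "(\<Sum>k\<in>UNIV. minv F c x i k * (F * kd k j + G * x$k * x$j)) = kd i j" for i j
  proof -
    have "(\<Sum>k\<in>UNIV. minv F c x i k * (F * kd k j + G * x$k * x$j)) = kd i j + x$i * x$j * (G / F - c * F - c * G * (x \<bullet> x))"
      unfolding minv_def using assms(1) by (simp add: ksimps sum_subtractf) (simp add: field_simps kd_def)
    thus ?thesis using key by simp
  qed
  show "(\<chi> i j. F * kd i j + G * x$i * x$j) ** (\<chi> p q. minv F c x p q) = mat 1"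
    using e1 by (simp add: matrix_matrix_mult_def mat_def vec_eq_iff) (simp add: kd_def)
  show "(\<chi> p q. minv F c x p q) ** (\<chi> i j. F * kd i j + G * x$i * x$j) = mat 1"
    using e2 by (simp add: matrix_matrix_mult_def mat_def vec_eq_iff) (simp add: kd_def)
qed


lemma Q_identity:
  fixes F G K L r a b c U V H :: real
  assumes F: "F > 0" and H: "H = F + r^2 * G" "H > 0" and r: "r > 0" and orth: "F * c + G * a * b = 0"
  defines "Pu \<equiv> G * U + K * a^2" and "Pv \<equiv> G * V + K * b^2"
  defines "A \<equiv> - (F / H) * G" and "B \<equiv> r^2 / H * (2 * G^2 - F * K)"
  defines "C \<equiv> (-4 * (F / H) + 2 + 8 * (H / F) - 6 * (H^2 / F^2)) * G + 4 * (H / F - F / H) * r^2 * K + r^6 / H * K^2 - r^4 * L"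
  shows "- (G * (U * V + 2 * c^2) + K * (U * b^2 + 4 * a * b * c + V * a^2) + L * a^2 * b^2)
     + (Pu * Pv * r^2 + 2 * G * b^2 * Pu + 2 * G * a^2 * Pv + 4 * G^2 * a * b * c) * inverse F
     - G / (F * H) * (Pu * r^2 + 2 * G * a^2) * (Pv * r^2 + 2 * G * b^2)
   = (A + 2 * B + C) * (a^2 / r^2) * (b^2 / r^2)
     + (A + B) * ((a^2 / r^2) * (V - b^2 / r^2) + (b^2 / r^2) * (U - a^2 / r^2))
     + A * (U - a^2 / r^2) * (V - b^2 / r^2)"
proof -
  have c: "c = - G * a * b / F" using orth F by (simp add: field_simps)
  show ?thesis
    unfolding c Pu_def Pv_def A_def B_def C_def
    using F H(2) r apply (simp add: field_simps)
    apply (simp only: H(1))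
    apply algebra
    done
qed


context radial begin

lemma radh_eq: "r \<in> I \<Longrightarrow> radh \<phi> r = F r + r^2 * G r"
  using I_pos[of r] by (simp add: radh_def fdot_def power2_eq_square)

lemma T4_t4: "T4 i j k l x = t4 (G (norm x)) (K (norm x)) (L (norm x)) x i j k l"
  by (simp add: T4_def t4_def)
lemma T3_t3: "T3 i j k x = t3 (G (norm x)) (K (norm x)) x i j k"
  by (simp add: T3_def t3_def)

lemma hess_S0: "x \<in> S0 \<Longrightarrow> hess \<Psi> x = (\<chi> i j. F (norm x) * kd i j + G (norm x) * x$i * x$j)"
  by (simp add: hess_def p2 T2_def vec_eq_iff)

lemma xx: "x \<bullet> x = (norm x)^2" for x :: "real^'n" by (simp add: power2_norm_eq_inner)

lemma AB_S0:
  fixes u v :: "real^'n"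
  assumes x: "x \<in> S0"
  defines "f \<equiv> F (norm x)" and "g \<equiv> G (norm x)" and "kk \<equiv> K (norm x)" and "ll \<equiv> L (norm x)"
    and "h \<equiv> radh \<phi> (norm x)" and "r \<equiv> norm x"
  defines "Pu \<equiv> g * (u \<bullet> u) + kk * (u \<bullet> x)^2" and "Pv \<equiv> g * (v \<bullet> v) + kk * (v \<bullet> x)^2"
  shows "anti_bisec \<Psi> x u v =
     - (g * ((u \<bullet> u) * (v \<bullet> v) + 2 * (u \<bullet> v)^2) + kk * ((u \<bullet> u) * (v \<bullet> x)^2 + 4 * (u \<bullet> x) * (v \<bullet> x) * (u \<bullet> v) + (v \<bullet> v) * (u \<bullet> x)^2) + ll * (u \<bullet> x)^2 * (v \<bullet> x)^2)
     + (Pu * Pv * r^2 + 2 * g * (v \<bullet> x)^2 * Pu + 2 * g * (u \<bullet> x)^2 * Pv + 4 * g^2 * (u \<bullet> x) * (v \<bullet> x) * (u \<bullet> v)) * inverse f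
     - g / (f * h) * (Pu * r^2 + 2 * g * (u \<bullet> x)^2) * (Pv * r^2 + 2 * g * (v \<bullet> x)^2)"
proof -
  have rI: "norm x \<in> I" by (rule S0_I[OF x])
  have fpos: "f > 0" and hpos: "h > 0" using pos rI by (auto simp: f_def h_def I_def)
  have h_eq: "h = f + (x \<bullet> x) * g" using radh_eq[OF rI] by (simp add: h_def f_def g_def xx)
  have inv: "matrix_inv (hess \<Psi> x) = (\<chi> p q. minv f (g / (f * h)) x p q)"
    unfolding hess_S0[OF x] f_def[symmetric] g_def[symmetric] h_eq
    by (rule inv_formula) (use fpos hpos h_eq in auto)
  have "anti_bisec \<Psi> x u v =
    (\<Sum>i\<in>UNIV. \<Sum>j\<in>UNIV. \<Sum>k\<in>UNIV. \<Sum>l\<in>UNIV.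
        (- t4 g kk ll x i j k l
         + (\<Sum>p\<in>UNIV. \<Sum>q\<in>UNIV. t3 g kk x i j p * t3 g kk x k l q * minv f (g / (f * h)) x p q))
        * u $ i * u $ j * v $ k * v $ l)"
    unfolding anti_bisec_def inv p4[OF x] p3[OF x] T4_t4 T3_t3 f_def g_def kk_def ll_def by simp
  also have "\<dots> = - (g * ((u \<bullet> u) * (v \<bullet> v) + 2 * (u \<bullet> v)^2) + kk * ((u \<bullet> u) * (v \<bullet> x)^2 + 4 * (u \<bullet> x) * (v \<bullet> x) * (u \<bullet> v) + (v \<bullet> v) * (u \<bullet> x)^2) + ll * (u \<bullet> x)^2 * (v \<bullet> x)^2)
     + ((alphav g kk x u \<bullet> alphav g kk x v) * inverse f - (g / (f * h)) * (alphav g kk x u \<bullet> x) * (alphav g kk x v \<bullet> x))"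
    unfolding ab_split t4_contract t3_contract minv_bilin ..
  also have "alphav g kk x u \<bullet> alphav g kk x v = Pu * Pv * r^2 + 2 * g * (v \<bullet> x)^2 * Pu + 2 * g * (u \<bullet> x)^2 * Pv + 4 * g^2 * (u \<bullet> x) * (v \<bullet> x) * (u \<bullet> v)"
    unfolding alphav_def Pu_def[symmetric] Pv_def[symmetric]
    by (simp add: inner_add_left inner_add_right xx r_def inner_commute[of x] algebra_simps power2_eq_square)
  also have "alphav g kk x u \<bullet> x = Pu * r^2 + 2 * g * (u \<bullet> x)^2"
    unfolding alphav_def Pu_def[symmetric]
    by (simp add: inner_add_left xx r_def algebra_simps power2_eq_square)
  also have "alphav g kk x v \<bullet> x = Pv * r^2 + 2 * g * (v \<bullet> x)^2"
    unfolding alphav_def Pv_def[symmetric]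
    by (simp add: inner_add_left xx r_def algebra_simps power2_eq_square)
  finally show ?thesis by (simp add: algebra_simps)
qed

end

lemma amgm:
  fixes S T p q :: real
  assumes "S \<ge> 0" "T \<ge> 0" "p \<ge> 0" "q \<ge> 0"
  shows "S * q + T * p \<ge> 2 * sqrt (S * T) * sqrt (p * q)"
proof -
  have "0 \<le> (sqrt (S * q) - sqrt (T * p))^2" by simp
  also have "\<dots> = S * q + T * p - 2 * sqrt (S * q) * sqrt (T * p)"
    using assms by (simp add: power2_diff real_sqrt_mult power_mult_distrib)
  finally have "2 * sqrt (S * q) * sqrt (T * p) \<le> S * q + T * p" by simp
  moreover have "sqrt (S * q) * sqrt (T * p) = sqrt (S * T) * sqrt (p * q)"
    by (simp add: real_sqrt_mult[symmetric] mult_ac)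
  ultimately show ?thesis by simp
qed

lemma QA:
  fixes F H al be ga S T p q :: real
  assumes F: "F > 0" and H: "H > 0" and be: "be \<ge> 0" and D: "al + 2 * be * (H / F) + ga * (H / F)^2 \<ge> 0"
    and nn: "S \<ge> 0" "T \<ge> 0" "p \<ge> 0" "q \<ge> 0" and eq: "H^2 * (S * T) = F^2 * (p * q)"
  shows "al * S * T + be * (S * q + T * p) + ga * p * q \<ge> 0"
proof -
  define k where "k = F / H"
  have k: "k > 0" using F H by (simp add: k_def)
  have ST: "S * T = k^2 * (p * q)" using eq H by (simp add: k_def field_simps)
  have "sqrt (S * T) = k * sqrt (p * q)" using ST k by (simp add: real_sqrt_mult)
  hence "S * q + T * p \<ge> 2 * k * (p * q)"
    using amgm[OF nn] nn by (simp add: mult.assoc)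
  hence "be * (S * q + T * p) \<ge> be * (2 * k * (p * q))" using be by (rule mult_left_mono)
  hence "al * S * T + be * (S * q + T * p) + ga * p * q \<ge> al * k^2 * (p * q) + be * (2 * k * (p * q)) + ga * p * q"
    using ST by (simp add: mult.assoc)
  also have "al * k^2 * (p * q) + be * (2 * k * (p * q)) + ga * p * q
      = (p * q) * k^2 * (al + 2 * be * (H / F) + ga * (H / F)^2)"
    using F H by (simp add: k_def field_simps power2_eq_square)
  also have "\<dots> \<ge> 0" using nn D by simp
  finally show ?thesis by simp
qed

lemma QB:
  fixes F H al be ga S T p q :: real
  assumes F: "F > 0" and H: "H > 0" and be: "be \<ge> 0" and ga: "ga \<ge> 0"
    and D: "al + 2 * be * (H / F) + ga * (H / F)^2 \<ge> 0"
    and nn: "S \<ge> 0" "T \<ge> 0" "p \<ge> 0" "q \<ge> 0" and le: "H^2 * (S * T) \<le> F^2 * (p * q)"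
  shows "al * S * T + be * (S * q + T * p) + ga * p * q \<ge> 0"
proof -
  define m where "m = sqrt (S * T)"
  define N where "N = sqrt (p * q)"
  have m0: "m \<ge> 0" and N0: "N \<ge> 0" using nn by (auto simp: m_def N_def)
  have mm: "S * T = m^2" and NN: "p * q = N^2" using nn by (auto simp: m_def N_def)
  have "sqrt (H^2 * (S * T)) \<le> sqrt (F^2 * (p * q))" using le by simp
  hence mN: "H * m \<le> F * N" using F H by (simp add: m_def N_def real_sqrt_mult)
  have "S * q + T * p \<ge> 2 * m * N" using amgm[OF nn] by (simp add: m_def N_def)
  hence "be * (S * q + T * p) \<ge> be * (2 * m * N)" using be by (rule mult_left_mono)
  hence Q1: "al * S * T + be * (S * q + T * p) + ga * p * q \<ge> al * m^2 + be * (2 * m * N) + ga * N^2"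
    using mm NN by (simp add: mult.assoc)
  have Q2: "al * m^2 + be * (2 * m * N) + ga * N^2 \<ge> 0"
  proof (cases "al \<ge> 0")
    case True thus ?thesis using m0 N0 be ga by simp
  next
    case False
    have a1: "al * m^2 * H \<ge> al * m * (F * N)"
    proof -
      have "m * (H * m) \<le> m * (F * N)" using mN m0 by (rule mult_left_mono)
      hence "al * (m * (F * N)) \<le> al * (m * (H * m))" using mult_left_mono_neg[of "m * (H * m)" "m * (F * N)" al] False by simp
      thus ?thesis by (simp add: power2_eq_square mult_ac)
    qed
    have g1: "ga * N^2 * F \<ge> ga * N * (H * m)"
    proof -
      have "N * (H * m) \<le> N * (F * N)" using mN N0 by (rule mult_left_mono)
      hence "ga * (N * (H * m)) \<le> ga * (N * (F * N))" using ga by (rule mult_left_mono)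
      thus ?thesis by (simp add: power2_eq_square mult_ac)
    qed
    have "(al * m^2 + be * (2 * m * N) + ga * N^2) * (H * F)
        = (al * m^2 * H) * F + be * (2 * m * N) * H * F + (ga * N^2 * F) * H" by (simp add: algebra_simps)
    also have "\<dots> \<ge> (al * m * (F * N)) * F + be * (2 * m * N) * H * F + (ga * N * (H * m)) * H"
    proof -
      have "(al * m * (F * N)) * F \<le> (al * m^2 * H) * F" using a1 F by (simp add: mult_right_mono)
      moreover have "(ga * N * (H * m)) * H \<le> (ga * N^2 * F) * H" using g1 H by (simp add: mult_right_mono)
      ultimately show ?thesis by linarith
    qed
    also have "(al * m * (F * N)) * F + be * (2 * m * N) * H * F + (ga * N * (H * m)) * H
        = (m * N) * F^2 * (al + 2 * be * (H / F) + ga * (H / F)^2)"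
      using F H by (simp add: field_simps power2_eq_square)
    also have "\<dots> \<ge> 0" using m0 N0 D by simp
    finally have "(al * m^2 + be * (2 * m * N) + ga * N^2) * (H * F) \<ge> 0" .
    moreover have "H * F > 0" using F H by simp
    ultimately show ?thesis using zero_le_mult_iff by (metis linorder_not_le)
  qed
  show ?thesis using Q1 Q2 by linarith
qed

lemma lagrange2:
  fixes x y z :: "real^'n::finite"
  assumes card: "CARD('n) = 2" and x: "x \<noteq> 0" and yx: "y \<bullet> x = 0" and zx: "z \<bullet> x = 0"
  shows "(y \<bullet> z)^2 = (y \<bullet> y) * (z \<bullet> z)"
proof -
  obtain i j :: 'n where ij: "i \<noteq> j" "UNIV = {i, j}"
    using card card_2_iff[of "UNIV :: 'n set"] by blast
  have ip: "w \<bullet> w' = w$i * w'$i + w$j * w'$j" for w w' :: "real^'n"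
    unfolding inner_vec_def ij(2) using ij(1) by simp
  have xne: "x$i \<noteq> 0 \<or> x$j \<noteq> 0"
  proof (rule ccontr)
    assume "\<not> (x$i \<noteq> 0 \<or> x$j \<noteq> 0)"
    hence "\<forall>k. x$k = 0" using ij(2) by (metis UNIV_I empty_iff insert_iff)
    thus False using x by (simp add: vec_eq_iff)
  qed
  have e1: "y$i * x$i + y$j * x$j = 0" using yx by (simp add: ip)
  have e2: "z$i * x$i + z$j * x$j = 0" using zx by (simp add: ip)
  have e1': "y$i * x$i = - (y$j * x$j)" and e2': "z$i * x$i = - (z$j * x$j)"
    and e1'': "y$j * x$j = - (y$i * x$i)" and e2'': "z$j * x$j = - (z$i * x$i)" using e1 e2 by linarith+
  have d1: "(y$i * z$j - y$j * z$i) * x$i = 0"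
  proof -
    have "(y$i * z$j - y$j * z$i) * x$i = z$j * (y$i * x$i) - y$j * (z$i * x$i)" by (simp add: algebra_simps)
    also have "\<dots> = z$j * (- (y$j * x$j)) - y$j * (- (z$j * x$j))" using e1' e2' by (simp only:)
    finally show ?thesis by (simp add: algebra_simps)
  qed
  have d2: "(y$i * z$j - y$j * z$i) * x$j = 0"
  proof -
    have "(y$i * z$j - y$j * z$i) * x$j = y$i * (z$j * x$j) - z$i * (y$j * x$j)" by (simp add: algebra_simps)
    also have "\<dots> = y$i * (- (z$i * x$i)) - z$i * (- (y$i * x$i))" using e1'' e2'' by (simp only:)
    finally show ?thesis by (simp add: algebra_simps)
  qed
  have det: "y$i * z$j - y$j * z$i = 0" using xne d1 d2 by auto
  have "(y \<bullet> y) * (z \<bullet> z) - (y \<bullet> z)^2 = (y$i * z$j - y$j * z$i)^2"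
    by (simp add: ip power2_eq_square algebra_simps)
  thus ?thesis using det by simp
qed


lemma D_rel: "coefD \<phi> r = (coefA \<phi> r + 2 * coefB \<phi> r + coefC \<phi> r)
   + 2 * (coefA \<phi> r + coefB \<phi> r) * (radh \<phi> r / radf \<phi> r) + coefA \<phi> r * (radh \<phi> r / radf \<phi> r)^2"
  unfolding coefD_def Let_def by (simp add: algebra_simps power2_eq_square)

lemma proj_inner:
  fixes u v x :: "real^'n::finite"
  assumes R: "x \<bullet> x = R" "R \<noteq> 0"
  shows "(u - ((u \<bullet> x) / R) *\<^sub>R x) \<bullet> (v - ((v \<bullet> x) / R) *\<^sub>R x) = u \<bullet> v - (u \<bullet> x) * (v \<bullet> x) / R"
proof -
  have gen: "(u - \<alpha> *\<^sub>R x) \<bullet> (v - \<beta> *\<^sub>R x) = u \<bullet> v - \<beta> * (u \<bullet> x) - \<alpha> * (v \<bullet> x) + \<alpha> * \<beta> * (x \<bullet> x)" for \<alpha> \<beta>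
    by (simp add: inner_diff_left inner_diff_right inner_commute[of x v] algebra_simps)
  define a where "a = u \<bullet> x"
  define b where "b = v \<bullet> x"
  have "(u - (a / R) *\<^sub>R x) \<bullet> (v - (b / R) *\<^sub>R x) = u \<bullet> v - (b / R) * a - (a / R) * b + (a / R) * (b / R) * R"
    unfolding gen R(1) a_def b_def ..
  also have "\<dots> = u \<bullet> v - a * b / R" using R(2) by (simp add: field_simps)
  finally show ?thesis by (simp add: a_def b_def)
qed

context radial begin

lemma hess_orth_S0: "x \<in> S0 \<Longrightarrow> (\<Sum>i\<in>UNIV. \<Sum>j\<in>UNIV. hess \<Psi> x $ i $ j * u $ i * v $ j)
   = F (norm x) * (u \<bullet> v) + G (norm x) * (u \<bullet> x) * (v \<bullet> x)"
  by (simp add: hess_S0 hess_bilin)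

lemma AB_Q:
  fixes u v :: "real^'n"
  assumes x: "x \<in> S0" and orth: "F (norm x) * (u \<bullet> v) + G (norm x) * (u \<bullet> x) * (v \<bullet> x) = 0"
  defines "A \<equiv> coefA \<phi> (norm x)" and "B \<equiv> coefB \<phi> (norm x)" and "C \<equiv> coefC \<phi> (norm x)"
  defines "S \<equiv> (u \<bullet> x)^2 / (norm x)^2" and "T \<equiv> (v \<bullet> x)^2 / (norm x)^2"
  defines "p \<equiv> u \<bullet> u - (u \<bullet> x)^2 / (norm x)^2" and "q \<equiv> v \<bullet> v - (v \<bullet> x)^2 / (norm x)^2"
  shows "anti_bisec \<Psi> x u v = (A + 2 * B + C) * S * T + (A + B) * (S * q + T * p) + A * p * q"
proof -
  have rI: "norm x \<in> I" by (rule S0_I[OF x])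
  have fpos: "F (norm x) > 0" and hpos: "radh \<phi> (norm x) > 0" using pos rI by (auto simp: I_def)
  have r: "norm x > 0" using S0_nz[OF x] by simp
  note Q = Q_identity[where F="F (norm x)" and G="G (norm x)" and K="K (norm x)" and L="L (norm x)"
      and r="norm x" and a="u \<bullet> x" and b="v \<bullet> x" and c="u \<bullet> v" and U="u \<bullet> u" and V="v \<bullet> v"
      and H="radh \<phi> (norm x)", OF fpos radh_eq[OF rI] hpos r orth]
  show ?thesis unfolding AB_S0[OF x] Q
    by (simp add: A_def B_def C_def S_def T_def p_def q_def coefA_def coefB_def coefC_def Let_def)
qed

lemma p_nonneg: "0 \<le> u \<bullet> u - (u \<bullet> x)^2 / (norm x)^2" for u x :: "real^'n"
proof (cases "x = 0")
  case True thus ?thesis by simp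
next
  case False
  have "(u \<bullet> x)^2 \<le> (u \<bullet> u) * (x \<bullet> x)" by (rule Cauchy_Schwarz_ineq)
  hence "(u \<bullet> x)^2 / (norm x)^2 \<le> u \<bullet> u" using False by (simp add: xx divide_le_eq)
  thus ?thesis by simp
qed

lemma HST:
  fixes u v :: "real^'n"
  assumes x: "x \<in> S0" and orth: "F (norm x) * (u \<bullet> v) + G (norm x) * (u \<bullet> x) * (v \<bullet> x) = 0"
  defines "S \<equiv> (u \<bullet> x)^2 / (norm x)^2" and "T \<equiv> (v \<bullet> x)^2 / (norm x)^2"
  defines "p \<equiv> u \<bullet> u - (u \<bullet> x)^2 / (norm x)^2" and "q \<equiv> v \<bullet> v - (v \<bullet> x)^2 / (norm x)^2"
  defines "w \<equiv> (u - ((u \<bullet> x) / (norm x)^2) *\<^sub>R x) \<bullet> (v - ((v \<bullet> x) / (norm x)^2) *\<^sub>R x)"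
  shows "(radh \<phi> (norm x))^2 * (S * T) = (F (norm x))^2 * w^2"
    and "w^2 \<le> p * q"
    and "CARD('n) = 2 \<Longrightarrow> w^2 = p * q"
proof -
  have rI: "norm x \<in> I" by (rule S0_I[OF x])
  have fpos: "F (norm x) > 0" using pos rI by (auto simp: I_def)
  have r: "norm x > 0" using S0_nz[OF x] by simp
  define R where "R = (norm x)^2"
  have R: "R > 0" "x \<bullet> x = R" using r by (auto simp: R_def xx)
  define u' where "u' = u - ((u \<bullet> x) / R) *\<^sub>R x"
  define v' where "v' = v - ((v \<bullet> x) / R) *\<^sub>R x"
  have w: "w = u' \<bullet> v'" by (simp add: w_def u'_def v'_def R_def)
  have wv: "u' \<bullet> v' = u \<bullet> v - (u \<bullet> x) * (v \<bullet> x) / R"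
    unfolding u'_def v'_def by (rule proj_inner) (use R in auto)
  have pu: "u' \<bullet> u' = p"
    unfolding u'_def p_def R_def[symmetric] by (subst proj_inner) (use R in \<open>auto simp: power2_eq_square\<close>)
  have qv: "v' \<bullet> v' = q"
    unfolding v'_def q_def R_def[symmetric] by (subst proj_inner) (use R in \<open>auto simp: power2_eq_square\<close>)
  have ux: "u' \<bullet> x = 0" and vx: "v' \<bullet> x = 0" using R by (auto simp: u'_def v'_def inner_diff_left)
  have c: "u \<bullet> v = - G (norm x) * (u \<bullet> x) * (v \<bullet> x) / F (norm x)" using orth fpos by (simp add: field_simps)
  have h: "radh \<phi> (norm x) = F (norm x) + R * G (norm x)" using radh_eq[OF rI] by (simp add: R_def)
  show "(radh \<phi> (norm x))^2 * (S * T) = (F (norm x))^2 * w^2"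
    unfolding w wv c h S_def T_def R_def[symmetric] using fpos R by (simp add: field_simps power2_eq_square)
  show "w^2 \<le> p * q" unfolding w pu[symmetric] qv[symmetric] by (rule Cauchy_Schwarz_ineq)
  show "CARD('n) = 2 \<Longrightarrow> w^2 = p * q"
    unfolding w pu[symmetric] qv[symmetric] using lagrange2[OF _ S0_nz[OF x] ux vx] by simp
qed

lemma noab_S0:
  fixes u v :: "real^'n"
  assumes x: "x \<in> S0" and orth: "(\<Sum>i\<in>UNIV. \<Sum>j\<in>UNIV. hess \<Psi> x $ i $ j * u $ i * v $ j) = 0"
    and AB: "coefA \<phi> (norm x) + coefB \<phi> (norm x) \<ge> 0" and D: "coefD \<phi> (norm x) \<ge> 0"
    and A: "CARD('n) = 2 \<or> coefA \<phi> (norm x) \<ge> 0"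
  shows "anti_bisec \<Psi> x u v \<ge> 0"
proof -
  have rI: "norm x \<in> I" by (rule S0_I[OF x])
  have fpos: "F (norm x) > 0" and hpos: "radh \<phi> (norm x) > 0" using pos rI by (auto simp: I_def)
  have o: "F (norm x) * (u \<bullet> v) + G (norm x) * (u \<bullet> x) * (v \<bullet> x) = 0" using orth hess_orth_S0[OF x] by simp
  note H = HST[OF x o]
  note Dr = D_rel[of \<phi> "norm x"]
  have nn: "0 \<le> (u \<bullet> x)^2 / (norm x)^2" "0 \<le> (v \<bullet> x)^2 / (norm x)^2"
     "0 \<le> u \<bullet> u - (u \<bullet> x)^2 / (norm x)^2" "0 \<le> v \<bullet> v - (v \<bullet> x)^2 / (norm x)^2"
    using p_nonneg by auto
  show ?thesis
  proof (cases "CARD('n) = 2")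
    case True
    have eq: "(radh \<phi> (norm x))^2 * ((u \<bullet> x)^2 / (norm x)^2 * ((v \<bullet> x)^2 / (norm x)^2))
        = (F (norm x))^2 * ((u \<bullet> u - (u \<bullet> x)^2 / (norm x)^2) * (v \<bullet> v - (v \<bullet> x)^2 / (norm x)^2))"
      using H(1) H(3)[OF True] by simp
    show ?thesis unfolding AB_Q[OF x o]
      by (rule QA[OF fpos hpos AB _ nn eq]) (use D Dr in simp)
  next
    case False
    hence A0: "coefA \<phi> (norm x) \<ge> 0" using A by simp
    have le: "(radh \<phi> (norm x))^2 * ((u \<bullet> x)^2 / (norm x)^2 * ((v \<bullet> x)^2 / (norm x)^2))
        \<le> (F (norm x))^2 * ((u \<bullet> u - (u \<bullet> x)^2 / (norm x)^2) * (v \<bullet> v - (v \<bullet> x)^2 / (norm x)^2))"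
      using H(1) H(2) by (simp add: mult_left_mono)
    show ?thesis unfolding AB_Q[OF x o]
      by (rule QB[OF fpos hpos AB A0 _ nn le]) (use D Dr in simp)
  qed
qed

end

context radial begin

lemma ex_j: "\<exists>j::'n. j \<noteq> i"
proof (rule ccontr)
  assume "\<not> (\<exists>j::'n. j \<noteq> i)"
  hence "(UNIV :: 'n set) = {i}" by auto
  hence "card (UNIV :: 'n set) = card {i}" by (rule arg_cong)
  thus False using card2 by simp
qed

lemma ex_jk: assumes "CARD('n) \<noteq> 2" shows "\<exists>j k::'n. j \<noteq> i \<and> k \<noteq> i \<and> j \<noteq> k"
proof -
  have "3 \<le> card (UNIV :: 'n set)" using card2 assms by simp
  then obtain T :: "'n set" where "T \<subseteq> UNIV" "card T = 3" "finite T"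
    using obtain_subset_with_card_n by metis
  then obtain x y z where T: "T = {x, y, z}" "x \<noteq> y" "y \<noteq> z" "x \<noteq> z" using card_3_iff by metis
  show ?thesis
  proof (cases "x = i")
    case True thus ?thesis using T by (intro exI[of _ y] exI[of _ z]) auto
  next
    case False
    show ?thesis
    proof (cases "y = i")
      case True thus ?thesis using T False by (intro exI[of _ x] exI[of _ z]) auto
    next
      case False2: False
      thus ?thesis using T False by (intro exI[of _ x] exI[of _ y]) auto
    qed
  qed
qed

lemma ray0: "r \<in> I \<Longrightarrow> r *\<^sub>R e0 \<in> S0"
  using I_ball[of r] I_pos[of r] by (auto simp: S0_def)

lemma norm_ray0: "r \<in> I \<Longrightarrow> norm (r *\<^sub>R e0) = r"
  using I_pos[of r] by simp

lemma ax_in: "axis j (1::real) \<bullet> axis k 1 = kd j k"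
  by (simp add: inner_axis_axis kd_def)

lemma W1:
  assumes N: "NOAB \<Psi> (eball0 a)" and r: "r \<in> I"
  shows "coefA \<phi> r + coefB \<phi> r \<ge> 0"
proof -
  obtain j where j: "j \<noteq> i0" using ex_j by blast
  let ?x = "r *\<^sub>R e0" and ?u = "axis j (1::real)" and ?v = "e0"
  have x: "?x \<in> S0" by (rule ray0[OF r])
  have nx: "norm ?x = r" by (rule norm_ray0[OF r])
  have r0: "r > 0" using I_pos[OF r] .
  have ip: "?u \<bullet> ?x = 0" "?v \<bullet> ?x = r" "?u \<bullet> ?v = 0" "?u \<bullet> ?u = 1" "?v \<bullet> ?v = 1"
    using j by (auto simp: ax_in kd_def)
  have o: "F (norm ?x) * (?u \<bullet> ?v) + G (norm ?x) * (?u \<bullet> ?x) * (?v \<bullet> ?x) = 0" using ip by simp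
  have "anti_bisec \<Psi> ?x ?u ?v \<ge> 0"
    using N x o hess_orth_S0[OF x, of ?u ?v] unfolding NOAB_def S0_def by auto
  also have "anti_bisec \<Psi> ?x ?u ?v = coefA \<phi> r + coefB \<phi> r"
    unfolding AB_Q[OF x o] nx ip using r0 by simp
  finally show ?thesis .
qed

lemma W2:
  assumes N: "NOAB \<Psi> (eball0 a)" and r: "r \<in> I" and c: "CARD('n) \<noteq> 2"
  shows "coefA \<phi> r \<ge> 0"
proof -
  obtain j k where jk: "j \<noteq> i0" "k \<noteq> i0" "j \<noteq> k" using ex_jk[OF c] by blast
  let ?x = "r *\<^sub>R e0" and ?u = "axis j (1::real)" and ?v = "axis k (1::real)"
  have x: "?x \<in> S0" by (rule ray0[OF r])
  have nx: "norm ?x = r" by (rule norm_ray0[OF r])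
  have r0: "r > 0" using I_pos[OF r] .
  have ip: "?u \<bullet> ?x = 0" "?v \<bullet> ?x = 0" "?u \<bullet> ?v = 0" "?u \<bullet> ?u = 1" "?v \<bullet> ?v = 1"
    using jk by (auto simp: ax_in kd_def)
  have o: "F (norm ?x) * (?u \<bullet> ?v) + G (norm ?x) * (?u \<bullet> ?x) * (?v \<bullet> ?x) = 0" using ip by simp
  have "anti_bisec \<Psi> ?x ?u ?v \<ge> 0"
    using N x o hess_orth_S0[OF x, of ?u ?v] unfolding NOAB_def S0_def by auto
  also have "anti_bisec \<Psi> ?x ?u ?v = coefA \<phi> r"
    unfolding AB_Q[OF x o] nx ip using r0 by simp
  finally show ?thesis .
qed

lemma W3:
  assumes N: "NOAB \<Psi> (eball0 a)" and r: "r \<in> I"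
  shows "coefD \<phi> r \<ge> 0"
proof -
  obtain j where j: "j \<noteq> i0" using ex_j by blast
  have r0: "r > 0" using I_pos[OF r] .
  have fpos: "F r > 0" and hpos: "radh \<phi> r > 0" using pos r by (auto simp: I_def)
  define s where "s = sqrt (F r / radh \<phi> r)"
  have s0: "s > 0" using fpos hpos by (simp add: s_def)
  have ss: "s^2 = F r / radh \<phi> r" using fpos hpos by (simp add: s_def)
  let ?x = "r *\<^sub>R e0" and ?u = "s *\<^sub>R e0 + axis j (1::real)" and ?v = "s *\<^sub>R e0 - axis j (1::real)"
  have x: "?x \<in> S0" by (rule ray0[OF r])
  have nx: "norm ?x = r" by (rule norm_ray0[OF r])
  have ip: "?u \<bullet> ?x = s * r" "?v \<bullet> ?x = s * r" "?u \<bullet> ?v = s^2 - 1" "?u \<bullet> ?u = s^2 + 1" "?v \<bullet> ?v = s^2 + 1"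
    using j by (auto simp: ax_in kd_def inner_add_left inner_add_right inner_diff_left inner_diff_right power2_eq_square)
  have h: "radh \<phi> r = F r + r^2 * G r" by (rule radh_eq[OF r])
  have o: "F (norm ?x) * (?u \<bullet> ?v) + G (norm ?x) * (?u \<bullet> ?x) * (?v \<bullet> ?x) = 0"
  proof -
    have "F r * (s^2 - 1) + G r * (s * r) * (s * r) = s^2 * radh \<phi> r - F r"
      unfolding h by (simp add: algebra_simps power2_eq_square)
    also have "\<dots> = 0" using ss hpos by simp
    finally show ?thesis unfolding nx ip .
  qed
  have "anti_bisec \<Psi> ?x ?u ?v \<ge> 0"
    using N x o hess_orth_S0[OF x, of ?u ?v] unfolding NOAB_def S0_def by auto
  also have "anti_bisec \<Psi> ?x ?u ?v = (coefA \<phi> r + 2 * coefB \<phi> r + coefC \<phi> r) * s^2 * s^2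
       + (coefA \<phi> r + coefB \<phi> r) * (s^2 + s^2) + coefA \<phi> r"
    unfolding AB_Q[OF x o] nx ip using r0 by (simp add: power_mult_distrib)
  also have "\<dots> = s^2 * s^2 * coefD \<phi> r"
    unfolding D_rel[of \<phi> r] ss using fpos hpos by (simp add: field_simps power2_eq_square)
  finally show ?thesis using s0 by (simp add: zero_le_mult_iff)
qed

end

context radial begin

lemma ex_b: "\<exists>b>0. ereal b < a"
proof -
  obtain z where "ereal 0 < ereal z" "ereal z < a" using ereal_dense2[of "ereal 0" a] apos by (auto simp: zero_ereal_def)
  thus ?thesis by auto
qed

lemma ev_I: "eventually (\<lambda>t. t \<in> I) (at_right 0)"
proof -
  obtain b where b: "b > 0" "ereal b < a" using ex_b by blast
  show ?thesis
    using eventually_at_right_real[OF b(1)]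
    by (rule eventually_mono) (use b in \<open>auto simp: I_def intro: order.strict_trans[of _ "ereal b"]\<close>)
qed

lemma ray_S0: "t \<in> I \<Longrightarrow> t *\<^sub>R axis i (1::real) \<in> S0"
  using I_pos[of t] by (auto simp: S0_def I_def eball0_def)

lemma norm_ray: "t \<in> I \<Longrightarrow> norm (t *\<^sub>R axis i (1::real)) = t"
  using I_pos[of t] by simp

lemma ray_comp: "(t *\<^sub>R axis i (1::real)) $ m = t * kd i m"
  by (simp add: axis_kd)

lemma zero_in: "0 \<in> eball0 a" using apos by (simp add: eball0_def zero_ereal_def)

lemma cont0: "continuous (at 0) (iter_partial is \<Psi>)"
  using differentiable_imp_continuous_within[OF diff_at[OF zero_in]] .

lemma ray_lim: "continuous (at 0) g \<Longrightarrow> ((\<lambda>t. g (t *\<^sub>R axis i (1::real))) \<longlongrightarrow> g 0) (at_right 0)"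
proof -
  assume c: "continuous (at 0) g"
  have "((\<lambda>t. t *\<^sub>R axis i (1::real)) \<longlongrightarrow> 0 *\<^sub>R axis i 1) (at_right 0)" by (intro tendsto_intros)
  hence "((\<lambda>t. t *\<^sub>R axis i (1::real)) \<longlongrightarrow> 0) (at_right 0)" by simp
  thus ?thesis using isCont_tendsto_compose[of 0 g] c by (simp add: continuous_at)
qed

lemma ray_lim_ip: "((\<lambda>t. iter_partial is \<Psi> (t *\<^sub>R axis i (1::real))) \<longlongrightarrow> iter_partial is \<Psi> 0) (at_right 0)"
  by (rule ray_lim[OF cont0])

lemma lim_ev: "((\<lambda>t. iter_partial is \<Psi> (t *\<^sub>R axis i (1::real))) \<longlongrightarrow> iter_partial is \<Psi> 0) (at_right 0) \<Longrightarrow>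
   (\<And>t. t \<in> I \<Longrightarrow> iter_partial is \<Psi> (t *\<^sub>R axis i 1) = f t) \<Longrightarrow> (f \<longlongrightarrow> iter_partial is \<Psi> 0) (at_right 0)"
  using tendsto_cong[of "\<lambda>t. iter_partial is \<Psi> (t *\<^sub>R axis i (1::real))" f] ev_I
  by (metis (mono_tags, lifting) eventually_mono)

lemma deriv_quot:
  assumes "x0 = 0"
  shows "((\<lambda>t. (iter_partial is \<Psi> (t *\<^sub>R axis i (1::real)) - iter_partial is \<Psi> 0) / t) \<longlongrightarrow> partial i (iter_partial is \<Psi>) x0) (at_right 0)"
proof -
  obtain g' where g': "(iter_partial is \<Psi> has_derivative g') (at 0)"
    using diff_at[OF zero_in] by (auto simp: differentiable_def)
  have g0: "(iter_partial is \<Psi> has_derivative g') (at (0 *\<^sub>R axis i 1))" using g' by simp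
  have "((\<lambda>s. iter_partial is \<Psi> (s *\<^sub>R axis i 1)) has_real_derivative g' (axis i 1)) (at 0)"
    by (rule ray_frechet[OF g0])
  hence "((\<lambda>y. (iter_partial is \<Psi> (y *\<^sub>R axis i 1) - iter_partial is \<Psi> (0 *\<^sub>R axis i 1)) / (y - 0)) \<longlongrightarrow> g' (axis i 1)) (at 0)"
    by (subst (asm) has_field_derivative_iff) simp
  hence "((\<lambda>y. (iter_partial is \<Psi> (y *\<^sub>R axis i 1) - iter_partial is \<Psi> 0) / y) \<longlongrightarrow> g' (axis i 1)) (at_right 0)"
    by (auto intro: tendsto_mono[OF at_within_le_at])
  moreover have "partial i (iter_partial is \<Psi>) x0 = g' (axis i 1)"
    using partial_frechet_eq[OF g'] assms by simp
  ultimately show ?thesis by simp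
qed

lemma uniq: "(f \<longlongrightarrow> x) (at_right (0::real)) \<Longrightarrow> (f \<longlongrightarrow> y) (at_right 0) \<Longrightarrow> x = (y::real)"
  using tendsto_unique[OF trivial_limit_at_right_real] by blast

definition "j0 = (SOME j::'n. j \<noteq> i0)"
lemma j0: "j0 \<noteq> i0" unfolding j0_def using ex_j[of i0] by (rule someI_ex)

definition "g0 = partial j0 (partial j0 (partial j0 (partial j0 \<Psi>))) 0 / 3"

lemma G_lim: "(G \<longlongrightarrow> g0) (at_right 0)"
proof -
  have "((\<lambda>t. 3 * G t) \<longlongrightarrow> iter_partial [j0,j0,j0,j0] \<Psi> 0) (at_right 0)"
  proof (rule lim_ev[OF ray_lim_ip[of _ i0]])
    fix t assume t: "t \<in> I"
    show "iter_partial [j0,j0,j0,j0] \<Psi> (t *\<^sub>R e0) = 3 * G t"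
      using p4[OF ray_S0[OF t]] j0 norm_ray[OF t] by (simp add: T4_def ray_comp axis_kd kd_def)
  qed
  hence "((\<lambda>t. (3 * G t) / 3) \<longlongrightarrow> iter_partial [j0,j0,j0,j0] \<Psi> 0 / 3) (at_right 0)"
    by (intro tendsto_intros) auto
  thus ?thesis by (simp add: g0_def)
qed

lemma third_ij0: "partial i0 (partial j0 (partial j0 \<Psi>)) 0 = 0"
proof -
  have "((\<lambda>t. G t * t) \<longlongrightarrow> iter_partial [i0,j0,j0] \<Psi> 0) (at_right 0)"
  proof (rule lim_ev[OF ray_lim_ip[of _ i0]])
    fix t assume t: "t \<in> I"
    show "iter_partial [i0,j0,j0] \<Psi> (t *\<^sub>R e0) = G t * t"
      using p3[OF ray_S0[OF t]] j0 norm_ray[OF t] by (simp add: T3_def ray_comp axis_kd kd_def)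
  qed
  moreover have "((\<lambda>t. G t * t) \<longlongrightarrow> g0 * 0) (at_right 0)"
    by (intro tendsto_intros G_lim)
  ultimately show ?thesis using uniq by force
qed

lemma fourth_iijj: "partial i0 (partial i0 (partial j0 (partial j0 \<Psi>))) 0 = g0"
proof -
  have "((\<lambda>t. (iter_partial [i0,j0,j0] \<Psi> (t *\<^sub>R e0) - iter_partial [i0,j0,j0] \<Psi> 0) / t)
        \<longlongrightarrow> partial i0 (iter_partial [i0,j0,j0] \<Psi>) 0) (at_right 0)"
    by (rule deriv_quot) simp
  moreover have "eventually (\<lambda>t. (iter_partial [i0,j0,j0] \<Psi> (t *\<^sub>R e0) - iter_partial [i0,j0,j0] \<Psi> 0) / t = G t) (at_right 0)"
    using ev_I
  proof (rule eventually_mono)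
    fix t assume t: "t \<in> I"
    show "(iter_partial [i0,j0,j0] \<Psi> (t *\<^sub>R e0) - iter_partial [i0,j0,j0] \<Psi> 0) / t = G t"
      using p3[OF ray_S0[OF t]] j0 norm_ray[OF t] third_ij0 I_pos[OF t] by (simp add: T3_def ray_comp axis_kd kd_def)
  qed
  ultimately have "(G \<longlongrightarrow> partial i0 (iter_partial [i0,j0,j0] \<Psi>) 0) (at_right 0)"
    using tendsto_cong by fastforce
  thus ?thesis using uniq[OF _ G_lim] by simp
qed

lemma K_lim: "((\<lambda>t. K t * t^2) \<longlongrightarrow> 0) (at_right 0)"
proof -
  have "((\<lambda>t. G t + K t * t^2) \<longlongrightarrow> iter_partial [i0,i0,j0,j0] \<Psi> 0) (at_right 0)"
  proof (rule lim_ev[OF ray_lim_ip[of _ i0]])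
    fix t assume t: "t \<in> I"
    show "iter_partial [i0,i0,j0,j0] \<Psi> (t *\<^sub>R e0) = G t + K t * t^2"
      using p4[OF ray_S0[OF t]] j0 norm_ray[OF t] by (simp add: T4_def ray_comp axis_kd kd_def power2_eq_square)
  qed
  hence "((\<lambda>t. (G t + K t * t^2) - G t) \<longlongrightarrow> g0 - g0) (at_right 0)"
    using fourth_iijj by (intro tendsto_intros G_lim) auto
  thus ?thesis by simp
qed

end

context radial begin

lemma hess0:
  assumes f0: "(F \<longlongrightarrow> f0) (at_right 0)"
  shows "partial i (partial k \<Psi>) 0 = f0 * kd i k"
proof -
  have l1: "((\<lambda>t. F t * kd i k + G t * (t * kd i0 i) * (t * kd i0 k)) \<longlongrightarrow> iter_partial [i,k] \<Psi> 0) (at_right 0)"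
  proof (rule lim_ev[OF ray_lim_ip[of _ i0]])
    fix t assume t: "t \<in> I"
    show "iter_partial [i,k] \<Psi> (t *\<^sub>R e0) = F t * kd i k + G t * (t * kd i0 i) * (t * kd i0 k)"
      using p2[OF ray_S0[OF t]] norm_ray[OF t] by (simp add: T2_def axis_kd)
  qed
  have l2: "((\<lambda>t. F t * kd i k + G t * (t * kd i0 i) * (t * kd i0 k)) \<longlongrightarrow> f0 * kd i k + g0 * (0 * kd i0 i) * (0 * kd i0 k)) (at_right 0)"
    by (intro tendsto_intros f0 G_lim)
  show ?thesis using uniq[OF l1 l2] by simp
qed

lemma third0: "partial i (partial j (partial p \<Psi>)) 0 = 0"
proof -
  let ?c1 = "kd i j * kd i0 p + kd i p * kd i0 j + kd j p * kd i0 i" and ?c2 = "kd i0 i * kd i0 j * kd i0 p"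
  have l1: "((\<lambda>t. (G t * t) * ?c1 + (K t * t^2) * t * ?c2) \<longlongrightarrow> iter_partial [i,j,p] \<Psi> 0) (at_right 0)"
  proof (rule lim_ev[OF ray_lim_ip[of _ i0]])
    fix t assume t: "t \<in> I"
    show "iter_partial [i,j,p] \<Psi> (t *\<^sub>R e0) = (G t * t) * ?c1 + (K t * t^2) * t * ?c2"
      using p3[OF ray_S0[OF t]] norm_ray[OF t] by (simp add: T3_def axis_kd algebra_simps power2_eq_square)
  qed
  have l2: "((\<lambda>t. (G t * t) * ?c1 + (K t * t^2) * t * ?c2) \<longlongrightarrow> (g0 * 0) * ?c1 + 0 * 0 * ?c2) (at_right 0)"
    by (intro tendsto_intros G_lim K_lim)
  show ?thesis using uniq[OF l1 l2] by simp
qed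

lemma fourth0: "partial i (partial j (partial k (partial l \<Psi>))) 0
    = g0 * (kd i j * kd k l + kd i k * kd j l + kd i l * kd j k)"
proof -
  let ?c1 = "kd j k * kd i l + kd j l * kd i k + kd k l * kd i j" and ?c2 = "kd i j * kd i k * kd i l"
  have q: "((\<lambda>t. (iter_partial [j,k,l] \<Psi> (t *\<^sub>R axis i 1) - iter_partial [j,k,l] \<Psi> 0) / t)
        \<longlongrightarrow> partial i (iter_partial [j,k,l] \<Psi>) 0) (at_right 0)"
    by (rule deriv_quot) simp
  have "eventually (\<lambda>t. (iter_partial [j,k,l] \<Psi> (t *\<^sub>R axis i 1) - iter_partial [j,k,l] \<Psi> 0) / t
           = G t * ?c1 + (K t * t^2) * ?c2) (at_right 0)"
    using ev_I
  proof (rule eventually_mono)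
    fix t assume t: "t \<in> I"
    have t0: "t \<noteq> 0" using I_pos[OF t] by simp
    show "(iter_partial [j,k,l] \<Psi> (t *\<^sub>R axis i 1) - iter_partial [j,k,l] \<Psi> 0) / t = G t * ?c1 + (K t * t^2) * ?c2"
      using p3[OF ray_S0[OF t]] norm_ray[OF t] third0 t0
      by (simp add: T3_def axis_kd field_simps power2_eq_square)
  qed
  with q have l1: "((\<lambda>t. G t * ?c1 + (K t * t^2) * ?c2) \<longlongrightarrow> partial i (iter_partial [j,k,l] \<Psi>) 0) (at_right 0)"
    using tendsto_cong by fastforce
  have l2: "((\<lambda>t. G t * ?c1 + (K t * t^2) * ?c2) \<longlongrightarrow> g0 * ?c1 + 0 * ?c2) (at_right 0)"
    by (intro tendsto_intros G_lim K_lim)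
  show ?thesis using uniq[OF l1 l2] by (simp add: algebra_simps)
qed

lemma anti0: "anti_bisec \<Psi> 0 u v = - (g0 * ((u \<bullet> u) * (v \<bullet> v) + 2 * (u \<bullet> v)^2))"
proof -
  have "anti_bisec \<Psi> 0 u v = - (\<Sum>i\<in>UNIV. \<Sum>j\<in>UNIV. \<Sum>k\<in>UNIV. \<Sum>l\<in>UNIV. t4 g0 0 0 0 i j k l * u$i * u$j * v$k * v$l)"
    unfolding anti_bisec_def fourth0 third0 by (simp add: t4_def sum_negf)
  also have "\<dots> = - (g0 * ((u \<bullet> u) * (v \<bullet> v) + 2 * (u \<bullet> v)^2))"
    unfolding t4_contract by simp
  finally show ?thesis .
qed

lemma hess_orth0:
  assumes f0: "(F \<longlongrightarrow> f0) (at_right 0)"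
  shows "(\<Sum>i\<in>UNIV. \<Sum>j\<in>UNIV. hess \<Psi> 0 $ i $ j * u $ i * v $ j) = f0 * (u \<bullet> v)"
proof -
  have "(\<Sum>i\<in>UNIV. \<Sum>j\<in>UNIV. hess \<Psi> 0 $ i $ j * u $ i * v $ j)
      = (\<Sum>i\<in>UNIV. \<Sum>j\<in>UNIV. (f0 * kd i j + 0 * (0::real^'n)$i * (0::real^'n)$j) * u $ i * v $ j)"
    by (simp add: hess_def hess0[OF f0])
  also have "\<dots> = f0 * (u \<bullet> v)" unfolding hess_bilin by simp
  finally show ?thesis .
qed

lemma limAB:
  assumes f0: "(F \<longlongrightarrow> f0) (at_right 0)" "f0 > 0"
  shows "((\<lambda>t. coefA \<phi> t + coefB \<phi> t) \<longlongrightarrow> - g0) (at_right 0)"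
proof -
  have ev: "eventually (\<lambda>t. -(F t / (F t + t^2 * G t)) * G t + (2 * G t * (t^2 * G t) - F t * (K t * t^2)) / (F t + t^2 * G t)
       = coefA \<phi> t + coefB \<phi> t) (at_right 0)"
    using ev_I
  proof (rule eventually_mono)
    fix t assume t: "t \<in> I"
    have h: "radh \<phi> t = F t + t^2 * G t" by (rule radh_eq[OF t])
    have hpos: "F t + t^2 * G t > 0" using pos t h by (auto simp: I_def)
    show "-(F t / (F t + t^2 * G t)) * G t + (2 * G t * (t^2 * G t) - F t * (K t * t^2)) / (F t + t^2 * G t)
       = coefA \<phi> t + coefB \<phi> t"
      unfolding coefA_def coefB_def h using hpos by (simp add: field_simps power2_eq_square)
  qed
  have "((\<lambda>t. -(F t / (F t + t^2 * G t)) * G t + (2 * G t * (t^2 * G t) - F t * (K t * t^2)) / (F t + t^2 * G t))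
     \<longlongrightarrow> -(f0 / (f0 + 0^2 * g0)) * g0 + (2 * g0 * (0^2 * g0) - f0 * 0) / (f0 + 0^2 * g0)) (at_right 0)"
    using f0 by (intro tendsto_intros G_lim K_lim) auto
  hence "((\<lambda>t. -(F t / (F t + t^2 * G t)) * G t + (2 * G t * (t^2 * G t) - F t * (K t * t^2)) / (F t + t^2 * G t))
     \<longlongrightarrow> - g0) (at_right 0)" using f0 by simp
  thus ?thesis using tendsto_cong[OF ev] by simp
qed

end

theorem mainTheorem3:
  fixes \<Psi> :: "real^'n::finite \<Rightarrow> real" and \<phi> :: "real \<Rightarrow> real" and a :: ereal
  assumes "CARD('n) \<ge> 2"
    and "0 < a"
    and "smooth_on (eball0 a) \<Psi>"
    and "convex_on (eball0 a) \<Psi>"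
    and "\<forall>x\<in>eball0 a. \<Psi> x = \<phi> (norm x)"
    and "\<forall>r. 0 < r \<and> ereal r < a \<longrightarrow> radf \<phi> r > 0 \<and> radh \<phi> r > 0"
    and "\<exists>f0>0. (radf \<phi> \<longlongrightarrow> f0) (at_right 0)"
    and "\<exists>h0>0. (radh \<phi> \<longlongrightarrow> h0) (at_right 0)"
  shows "NOAB \<Psi> (eball0 a) \<longleftrightarrow>
    (if CARD('n) = 2
     then (\<forall>r. 0 < r \<and> ereal r < a \<longrightarrow> coefA \<phi> r + coefB \<phi> r \<ge> 0 \<and> coefD \<phi> r \<ge> 0)
     else (\<forall>r. 0 < r \<and> ereal r < a \<longrightarrow>
             coefA \<phi> r \<ge> 0 \<and> coefA \<phi> r + coefB \<phi> r \<ge> 0 \<and> coefD \<phi> r \<ge> 0))"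
proof -
  interpret radial \<Psi> \<phi> a
    by unfold_locales (use assms in auto)
  obtain f0 where f0: "f0 > 0" "(radf \<phi> \<longlongrightarrow> f0) (at_right 0)" using assms(7) by blast
  let ?crit = "\<forall>r. r \<in> I \<longrightarrow> coefA \<phi> r + coefB \<phi> r \<ge> 0 \<and> coefD \<phi> r \<ge> 0 \<and> (CARD('n) = 2 \<or> coefA \<phi> r \<ge> 0)"
  have rhs: "(if CARD('n) = 2
     then (\<forall>r. 0 < r \<and> ereal r < a \<longrightarrow> coefA \<phi> r + coefB \<phi> r \<ge> 0 \<and> coefD \<phi> r \<ge> 0)
     else (\<forall>r. 0 < r \<and> ereal r < a \<longrightarrow>
             coefA \<phi> r \<ge> 0 \<and> coefA \<phi> r + coefB \<phi> r \<ge> 0 \<and> coefD \<phi> r \<ge> 0)) \<longleftrightarrow> ?crit"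
    by (auto simp: I_def)
  have "NOAB \<Psi> (eball0 a) \<longleftrightarrow> ?crit"
  proof
    assume N: "NOAB \<Psi> (eball0 a)"
    show ?crit using W1[OF N] W2[OF N] W3[OF N] by blast
  next
    assume c: ?crit
    have g0: "g0 \<le> 0"
    proof -
      have "0 \<le> - g0"
        by (rule tendsto_lowerbound[OF limAB[OF f0(2) f0(1)]])
           (use ev_I c in \<open>auto elim: eventually_mono\<close>)
      thus ?thesis by simp
    qed
    show "NOAB \<Psi> (eball0 a)"
      unfolding NOAB_def
    proof (intro ballI allI impI)
      fix x u v assume x: "x \<in> eball0 a" and o: "(\<Sum>i\<in>UNIV. \<Sum>j\<in>UNIV. hess \<Psi> x $ i $ j * u $ i * v $ j) = 0"
      show "anti_bisec \<Psi> x u v \<ge> 0"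
      proof (cases "x = 0")
        case True
        have "f0 * (u \<bullet> v) = 0" using o hess_orth0[OF f0(2)] True by simp
        hence uv: "u \<bullet> v = 0" using f0(1) by simp
        have "0 \<le> - g0 * ((u \<bullet> u) * (v \<bullet> v))" using g0 by (simp add: mult_nonpos_nonneg)
        thus ?thesis using True anti0 uv by simp
      next
        case False
        hence xs: "x \<in> S0" using x by (simp add: S0_def)
        have r: "norm x \<in> I" by (rule S0_I[OF xs])
        show ?thesis by (rule noab_S0[OF xs o]) (use c r in auto)
      qed
    qed
  qed
  thus ?thesis using rhs by simp
qed


end
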